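(* There exist uncountably many pairwise non-isomorphic subgroups of $\mathrm{IET}$ that are generated by $3$ elements and are solvable of derived length exactly $3$.
   Context: $\mathrm{IET}$ denotes the group of interval exchange transformations of $[0,1)$: bijections of $[0,1)$ that are orientation-preserving piecewise isometries (piecewise translations), left-continuous, with finitely many discontinuity points. *)

theory Defs
  imports "HOL-Analysis.Analysis" "HOL-Algebra.Solvable_Groups"
begin

text \<open>An interval exchange transformation of [0,1): a bijection of [0,1) which is a
  piecewise translation with finitely many pieces, the pieces being half-open
  intervals [a_i, a_(i+1)) (the standard normalisation for [0,1)).  Outside [0,1)
  we normalise the function to be the identity, so that the IETs form a group under
  composition with unit id.\<close>

definition is_iet :: "(real \<Rightarrow> real) \<Rightarrow> bool" where
  "is_iet f \<longleftrightarrow>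
     bij_betw f {0..<1} {0..<1} \<and>
     (\<forall>x. x \<notin> {0..<1} \<longrightarrow> f x = x) \<and>
     (\<exists>(a :: nat \<Rightarrow> real) (c :: nat \<Rightarrow> real) (n :: nat).
        a 0 = 0 \<and> a n = 1 \<and> (\<forall>i<n. a i < a (Suc i)) \<and>
        (\<forall>i<n. \<forall>x\<in>{a i..<a (Suc i)}. f x = x + c i))"

definition IET :: "(real \<Rightarrow> real) monoid" where
  "IET = \<lparr> carrier = {f. is_iet f}, mult = (\<lambda>f g. f \<circ> g), one = id \<rparr>"

text \<open>Derived length exactly k of the subgroup with carrier H (derived series computed
  inside IET, which agrees with the derived series of H as a group).\<close>

definition derived_length_eq :: "(real \<Rightarrow> real) set \<Rightarrow> nat \<Rightarrow> bool" where
  "derived_length_eq H k \<longleftrightarrow>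
     ((derived IET) ^^ k) H = {\<one>\<^bsub>IET\<^esub>} \<and>
     (\<forall>j<k. ((derived IET) ^^ j) H \<noteq> {\<one>\<^bsub>IET\<^esub>})"

end

theory Submission
  imports Defs
begin


definition brk :: "(real \<Rightarrow> real) \<Rightarrow> real set \<Rightarrow> bool" where
  "brk f B \<longleftrightarrow> finite B \<and> (\<forall>x y. 0 \<le> x \<longrightarrow> x \<le> y \<longrightarrow> y < 1 \<longrightarrow>
       (\<forall>b\<in>B. \<not> (x < b \<and> b \<le> y)) \<longrightarrow> f y - y = f x - x)"

lemma brkD: "brk f B \<Longrightarrow> 0 \<le> x \<Longrightarrow> x \<le> y \<Longrightarrow> y < 1 \<Longrightarrow>
   (\<forall>b\<in>B. \<not> (x < b \<and> b \<le> y)) \<Longrightarrow> f y - y = f x - x"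
  unfolding brk_def by blast

lemma piece_exists:
  fixes a :: "nat \<Rightarrow> real"
  shows "a 0 \<le> x \<Longrightarrow> x < a n \<Longrightarrow> \<exists>i<n. a i \<le> x \<and> x < a (Suc i)"
proof (induction n)
  case 0 then show ?case by simp
next
  case (Suc n)
  show ?case
  proof (cases "x < a n")
    case True then show ?thesis using Suc by (meson less_SucI)
  next
    case False then show ?thesis using Suc by auto
  qed
qed

lemma mono_partition:
  fixes a :: "nat \<Rightarrow> real"
  assumes "\<forall>i<n. a i < a (Suc i)"
  shows "i < k \<Longrightarrow> k \<le> n \<Longrightarrow> a (Suc i) \<le> a k"
proof (induction k)
  case 0 then show ?case by simp
next
  case (Suc k)
  show ?case
  proof (cases "i = k")
    case True then show ?thesis by simp
  next
    case False
    then have "a (Suc i) \<le> a k" using Suc by simp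
    also have "a k < a (Suc k)" using assms Suc by simp
    finally show ?thesis by simp
  qed
qed

lemma mono_partition_less:
  fixes a :: "nat \<Rightarrow> real"
  assumes "\<forall>i<n. a i < a (Suc i)" "i < k" "k \<le> n"
  shows "a i < a k"
  using mono_partition[OF assms(1) assms(2,3)] assms by (metis le_less_trans less_le_trans order_le_less less_trans)

lemma iet_imp_brk:
  assumes "is_iet f" shows "\<exists>B. brk f B"
proof -
  obtain a c n where a: "a 0 = 0" "a n = 1" "\<forall>i<n. a i < a (Suc i)"
    "\<forall>i<n. \<forall>x\<in>{a i..<a (Suc i)}. f x = x + c i"
    using assms unfolding is_iet_def by blast
  have "brk f (a ` {..n})"
    unfolding brk_def
  proof (intro conjI allI impI)
    fix x y :: real
    assume xy: "0 \<le> x" "x \<le> y" "y < 1" "\<forall>b\<in>a ` {..n}. \<not> (x < b \<and> b \<le> y)"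
    obtain i where i: "i < n" "a i \<le> x" "x < a (Suc i)"
      using piece_exists[of a x n] a xy by auto
    have "a (Suc i) \<in> a ` {..n}" using i by auto
    then have "y < a (Suc i)" using xy i by force
    then show "f y - y = f x - x" using a(4) i xy by auto
  qed simp
  then show ?thesis by blast
qed

lemma brk_imp_iet:
  assumes bij: "bij_betw f {0..<1} {0..<1}" and out: "\<forall>x. x \<notin> {0..<1} \<longrightarrow> f x = x"
    and b: "brk f B"
  shows "is_iet f"
proof -
  define S where "S = {0,1} \<union> (B \<inter> {0<..<1::real})"
  have finS: "finite S" using b unfolding brk_def S_def by auto
  define L where "L = sorted_list_of_set S"
  have setL: "set L = S" and sL: "sorted_wrt (<) L" and dL: "distinct L"
    using finS unfolding L_def by auto
  have S01: "\<forall>s\<in>S. 0 \<le> s \<and> s \<le> 1" unfolding S_def by auto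
  define n where "n = length L - 1"
  have "0 \<in> set L" "1 \<in> set L" using setL S_def by auto
  then have lenL: "length L \<ge> 2"
  proof -
    have "{0,1} \<subseteq> S" unfolding S_def by auto
    then have "card {0::real,1} \<le> card S" using card_mono[OF finS] by blast
    then show ?thesis using distinct_card[OF dL] setL by simp
  qed
  have nL: "n < length L" "Suc n = length L" using lenL unfolding n_def by auto
  define a where "a i = L ! i" for i
  define c where "c i = f (a i) - a i" for i
  have mono: "\<forall>i<n. a i < a (Suc i)"
    unfolding a_def using sL nL sorted_wrt_nth_less by fastforce
  have aS: "i \<le> n \<Longrightarrow> a i \<in> S" for i unfolding a_def using setL nL by auto
  have a0: "a 0 = 0"
  proof -
    obtain k where k: "k < length L" "L ! k = 0" using \<open>0 \<in> set L\<close> by (metis in_set_conv_nth)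
    have "a 0 \<le> 0"
    proof (cases "k = 0")
      case True then show ?thesis using k a_def by simp
    next
      case False then show ?thesis using sorted_wrt_nth_less[OF sL, of 0 k] k a_def by simp
    qed
    moreover have "a 0 \<ge> 0" using aS[of 0] S01 by auto
    ultimately show ?thesis by simp
  qed
  have an: "a n = 1"
  proof -
    obtain k where k: "k < length L" "L ! k = 1" using \<open>1 \<in> set L\<close> by (metis in_set_conv_nth)
    have "a n \<ge> 1"
    proof (cases "k = n")
      case True then show ?thesis using k a_def by simp
    next
      case False then have "k < n" using k nL by simp
      then show ?thesis using sorted_wrt_nth_less[OF sL, of k n] k a_def nL by simp
    qed
    moreover have "a n \<le> 1" using aS[of n] S01 by auto
    ultimately show ?thesis by simp
  qed
  have pieces: "\<forall>i<n. \<forall>x\<in>{a i..<a (Suc i)}. f x = x + c i"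
  proof (intro allI impI ballI)
    fix i x assume i: "i < n" and x: "x \<in> {a i..<a (Suc i)}"
    have ai0: "0 \<le> a i" using aS[of i] S01 i by auto
    have a1: "a (Suc i) \<le> 1" using aS[of "Suc i"] S01 i by auto
    have "\<forall>bb\<in>B. \<not> (a i < bb \<and> bb \<le> x)"
    proof (intro ballI notI)
      fix bb assume bb: "bb \<in> B" "a i < bb \<and> bb \<le> x"
      then have "bb \<in> S" using ai0 x a1 unfolding S_def by auto
      then obtain k where k: "k < length L" "L ! k = bb" using setL by (metis in_set_conv_nth)
      have "i < k"
      proof (rule ccontr)
        assume "\<not> i < k"
        then have "k \<le> i" by simp
        then have "L ! k \<le> L ! i"
          using sorted_wrt_nth_less[OF sL, of k i] nL i by (cases "k = i") auto
        then show False using bb k a_def by simp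
      qed
      moreover have "k < Suc i"
      proof (rule ccontr)
        assume "\<not> k < Suc i"
        then have "Suc i \<le> k" by simp
        then have "L ! (Suc i) \<le> L ! k"
          using sorted_wrt_nth_less[OF sL, of "Suc i" k] k by (cases "k = Suc i") auto
        then show False using bb k a_def x by simp
      qed
      ultimately show False by simp
    qed
    then have "f x - x = f (a i) - a i"
      using brkD[OF b, of "a i" x] ai0 x a1 by auto
    then show "f x = x + c i" unfolding c_def by simp
  qed
  show ?thesis unfolding is_iet_def
    using bij out a0 an mono pieces by blast
qed

lemma is_iet_brk_iff:
  "is_iet f \<longleftrightarrow> bij_betw f {0..<1} {0..<1} \<and> (\<forall>x. x \<notin> {0..<1} \<longrightarrow> f x = x) \<and> (\<exists>B. brk f B)"
  using brk_imp_iet iet_imp_brk unfolding is_iet_def by blast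

lemma iet_bij_betw: "is_iet f \<Longrightarrow> bij_betw f {0..<1} {0..<1}"
  unfolding is_iet_def by blast

lemma iet_out: "is_iet f \<Longrightarrow> x \<notin> {0..<1} \<Longrightarrow> f x = x"
  unfolding is_iet_def by blast

lemma iet_in: "is_iet f \<Longrightarrow> x \<in> {0..<1} \<Longrightarrow> f x \<in> {0..<1}"
  using iet_bij_betw bij_betwE by blast

lemma iet_comp:
  assumes f: "is_iet f" and g: "is_iet g" shows "is_iet (f \<circ> g)"
proof -
  obtain Bf where Bf: "brk f Bf" using iet_imp_brk f by blast
  obtain Bg where Bg: "brk g Bg" using iet_imp_brk g by blast
  have injg: "inj_on g {0..<1}" using iet_bij_betw[OF g] bij_betw_def by blast
  define B where "B = Bg \<union> (g -` Bf \<inter> {0..<1})"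
  have "finite B" unfolding B_def using Bf Bg injg finite_vimage_IntI unfolding brk_def by blast
  have "brk (f \<circ> g) B" unfolding brk_def
  proof (intro conjI allI impI)
    show "finite B" by fact
    fix x y :: real
    assume xy: "0 \<le> x" "x \<le> y" "y < 1" "\<forall>b\<in>B. \<not> (x < b \<and> b \<le> y)"
    have nog: "\<forall>b\<in>Bg. \<not> (x < b \<and> b \<le> y)" using xy unfolding B_def by auto
    have dg: "g y - y = g x - x" using brkD[OF Bg, of x y] xy nog by blast
    define d where "d = g x - x"
    have gxin: "g x \<in> {0..<1}" "g y \<in> {0..<1}" using iet_in[OF g] xy by auto
    have "\<forall>b\<in>Bf. \<not> (g x < b \<and> b \<le> g y)"
    proof (intro ballI notI)
      fix b assume b: "b \<in> Bf" "g x < b \<and> b \<le> g y"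
      define z where "z = b - d"
      have z: "x < z" "z \<le> y" using b dg unfolding z_def d_def by auto
      have nogz: "\<forall>b\<in>Bg. \<not> (x < b \<and> b \<le> z)" using nog z by force
      have "g z - z = g x - x"
        using brkD[OF Bg, of x z] xy z nogz by auto
      then have "g z = b" unfolding z_def d_def by simp
      then have "z \<in> B" unfolding B_def using z xy b by auto
      then show False using xy z by auto
    qed
    then have "f (g y) - g y = f (g x) - g x"
      using brkD[OF Bf, of "g x" "g y"] gxin dg xy by auto
    then show "(f \<circ> g) y - y = (f \<circ> g) x - x" using dg by simp
  qed
  moreover have "bij_betw (f \<circ> g) {0..<1} {0..<1}"
    using bij_betw_trans iet_bij_betw f g by blast
  moreover have "\<forall>x. x \<notin> {0..<1} \<longrightarrow> (f \<circ> g) x = x" using iet_out[OF f] iet_out[OF g] by simp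
  ultimately show ?thesis using brk_imp_iet by blast
qed

lemma iet_bij: assumes f: "is_iet f" shows "bij f"
proof -
  have b: "bij_betw f {0..<1} {0..<1}" using iet_bij_betw f .
  define g where "g y = (if y \<in> {0..<1} then inv_into {0..<1} f y else y)" for y
  have "g \<circ> f = id"
  proof
    fix x show "(g \<circ> f) x = id x"
    proof (cases "x \<in> {0..<1}")
      case True
      then have "f x \<in> {0..<1}" using iet_in f by blast
      then show ?thesis using True b unfolding g_def by (simp add: bij_betw_inv_into_left)
    next
      case False
      then show ?thesis using iet_out[OF f False] unfolding g_def by auto
    qed
  qed
  moreover have "f \<circ> g = id"
  proof
    fix y show "(f \<circ> g) y = id y"
    proof (cases "y \<in> {0..<1}")
      case True
      then show ?thesis using b unfolding g_def by (simp add: bij_betw_inv_into_right)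
    next
      case False
      then show ?thesis using iet_out[OF f False] unfolding g_def by auto
    qed
  qed
  ultimately show ?thesis using o_bij by blast
qed

lemma iet_inv_in:
  assumes f: "is_iet f" and y: "y \<in> {0..<1}" shows "inv_into UNIV f y \<in> {0..<1}"
proof (rule ccontr)
  assume h: "inv_into UNIV f y \<notin> {0..<1}"
  have "f (inv_into UNIV f y) = y" using iet_bij[OF f] by (meson bij_inv_eq_iff)
  moreover have "f (inv_into UNIV f y) = inv_into UNIV f y" using iet_out[OF f h] .
  ultimately show False using h y by simp
qed

lemma iet_inv:
  assumes f: "is_iet f" shows "is_iet (inv_into UNIV f)"
proof -
  have bf: "bij f" using iet_bij f .
  have if1: "inv_into UNIV f (f x) = x" for x using bf by (simp add: bij_is_inj)
  have if2: "f (inv_into UNIV f x) = x" for x using bf by (meson bij_inv_eq_iff)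
  obtain a c n where a: "a 0 = 0" "a n = 1" "\<forall>i<n. a i < a (Suc i)"
    "\<forall>i<n. \<forall>x\<in>{a i..<a (Suc i)}. f x = x + c i"
    using f unfolding is_iet_def by blast
  have amono: "i < k \<Longrightarrow> k \<le> n \<Longrightarrow> a i < a k" for i k using mono_partition_less a by blast
  have arange: "i < n \<Longrightarrow> 0 \<le> a i \<and> a i < 1" for i
    using amono[of 0 i] amono[of i n] a by (cases "i = 0") auto
  have piece: "x \<in> {0..<1} \<Longrightarrow> \<exists>i<n. a i \<le> x \<and> x < a (Suc i)" for x
    using piece_exists[of a x n] a by auto
  have disj: "i < n \<Longrightarrow> k < n \<Longrightarrow> a i \<le> x \<Longrightarrow> x < a (Suc i) \<Longrightarrow> a k \<le> x \<Longrightarrow> x < a (Suc k) \<Longrightarrow> i = k"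
    for i k x
  proof (rule ccontr)
    assume h: "i < n" "k < n" "a i \<le> x" "x < a (Suc i)" "a k \<le> x" "x < a (Suc k)" "i \<noteq> k"
    show False
    proof (cases "i < k")
      case True then have "a (Suc i) \<le> a k" using mono_partition[OF a(3)] h by simp
      then show False using h by simp
    next
      case False then have "k < i" using h by simp
      then have "a (Suc k) \<le> a i" using mono_partition[OF a(3)] h by simp
      then show False using h by simp
    qed
  qed
  define B where "B = (\<lambda>i. a i + c i) ` {..<n}"
  have "brk (inv_into UNIV f) B" unfolding brk_def
  proof (intro conjI allI impI)
    show "finite B" unfolding B_def by simp
    fix u v :: real
    assume uv: "0 \<le> u" "u \<le> v" "v < 1" "\<forall>b\<in>B. \<not> (u < b \<and> b \<le> v)"
    define x where "x = inv_into UNIV f u"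
    have xin: "x \<in> {0..<1}" unfolding x_def using iet_inv_in[OF f] uv by auto
    have fx: "f x = u" unfolding x_def by (simp add: if2)
    obtain i where i: "i < n" "a i \<le> x" "x < a (Suc i)" using piece xin by blast
    have u_eq: "u = x + c i" using a(4) i fx by auto
    have "v < a (Suc i) + c i"
    proof (rule ccontr)
      assume "\<not> v < a (Suc i) + c i"
      define w where "w = a (Suc i) + c i"
      have w: "u < w" "w \<le> v" using \<open>\<not> v < a (Suc i) + c i\<close> u_eq i unfolding w_def by auto
      define z where "z = inv_into UNIV f w"
      have zin: "z \<in> {0..<1}" unfolding z_def using iet_inv_in[OF f] uv w by auto
      have fz: "f z = w" unfolding z_def by (simp add: if2)
      obtain k where k: "k < n" "a k \<le> z" "z < a (Suc k)" using piece zin by blast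
      have w_eq: "w = z + c k" using a(4) k fz by auto
      have "a k + c k \<noteq> w"
      proof
        assume "a k + c k = w"
        then have "w \<in> B" unfolding B_def using k by auto
        then show False using uv w by auto
      qed
      then have akw: "a k + c k < w" using w_eq k by simp
      define t where "t = max u (a k + c k)"
      have t1: "a i \<le> t - c i" "t - c i < a (Suc i)"
        using u_eq i akw w unfolding t_def w_def by auto
      have t2: "a k \<le> t - c k" "t - c k < a (Suc k)"
        using k akw w w_eq unfolding t_def by auto
      have "f (t - c i) = t" using a(4) i t1 by auto
      moreover have "f (t - c k) = t" using a(4) k t2 by auto
      ultimately have "t - c i = t - c k" using if1[of "t - c i"] if1[of "t - c k"] by simp
      then have "i = k" using disj[OF i(1) k(1) t1] t2 by simp
      then show False using w_eq k w_def by simp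
    qed
    have "a i \<le> v - c i" "v - c i < a (Suc i)" using \<open>v < a (Suc i) + c i\<close> u_eq uv i by auto
    then have "f (v - c i) = v" using a(4) i by auto
    then have "inv_into UNIV f v = v - c i" using if1[of "v - c i"] by simp
    moreover have "inv_into UNIV f u = u - c i" using x_def u_eq by simp
    ultimately show "inv_into UNIV f v - v = inv_into UNIV f u - u" by simp
  qed
  moreover have "bij_betw (inv_into UNIV f) {0..<1} {0..<1}"
  proof (rule bij_betw_byWitness[where f' = f])
    show "\<forall>x\<in>{0..<1}. f (inv_into UNIV f x) = x" by (simp add: if2)
    show "\<forall>x\<in>{0..<1}. inv_into UNIV f (f x) = x" by (simp add: if1)
    show "inv_into UNIV f ` {0..<1} \<subseteq> {0..<1}"
      using iet_inv_in[OF f] by auto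
    show "f ` {0..<1} \<subseteq> {0..<1}" using iet_in f by blast
  qed
  moreover have "\<forall>x. x \<notin> {0..<1} \<longrightarrow> inv_into UNIV f x = x"
  proof (intro allI impI)
    fix x :: real assume "x \<notin> {0..<1}"
    then have "f x = x" by (rule iet_out[OF f])
    then show "inv_into UNIV f x = x" using if1[of x] by simp
  qed
  ultimately show ?thesis using brk_imp_iet by blast
qed

lemma iet_id: "is_iet id"
  unfolding is_iet_def
  apply (intro conjI)
    apply simp
   apply simp
  apply (rule exI[of _ "\<lambda>i. if i = 0 then 0 else 1"])
  apply (rule exI[of _ "\<lambda>i. 0"])
  apply (rule exI[of _ 1])
  by auto

lemma carrier_IET: "carrier IET = {f. is_iet f}" unfolding IET_def by simp
lemma mult_IET [simp]: "f \<otimes>\<^bsub>IET\<^esub> g = f \<circ> g" unfolding IET_def by simp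
lemma one_IET [simp]: "\<one>\<^bsub>IET\<^esub> = id" unfolding IET_def by simp

lemma group_IET: "group IET"
proof (rule groupI)
  show "\<And>x y. x \<in> carrier IET \<Longrightarrow> y \<in> carrier IET \<Longrightarrow> x \<otimes>\<^bsub>IET\<^esub> y \<in> carrier IET"
    using iet_comp carrier_IET by auto
  show "\<one>\<^bsub>IET\<^esub> \<in> carrier IET" using iet_id carrier_IET by auto
  show "\<And>x y z. x \<in> carrier IET \<Longrightarrow> y \<in> carrier IET \<Longrightarrow> z \<in> carrier IET \<Longrightarrow>
     x \<otimes>\<^bsub>IET\<^esub> y \<otimes>\<^bsub>IET\<^esub> z = x \<otimes>\<^bsub>IET\<^esub> (y \<otimes>\<^bsub>IET\<^esub> z)"
    by (simp add: comp_assoc)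
  show "\<And>x. x \<in> carrier IET \<Longrightarrow> \<one>\<^bsub>IET\<^esub> \<otimes>\<^bsub>IET\<^esub> x = x" by simp
  show "\<exists>y\<in>carrier IET. y \<otimes>\<^bsub>IET\<^esub> x = \<one>\<^bsub>IET\<^esub>" if "x \<in> carrier IET" for x
  proof -
    have "is_iet x" using that carrier_IET by auto
    then have "is_iet (inv_into UNIV x)" "inv_into UNIV x \<circ> x = id"
      using iet_inv iet_bij by (auto simp add: bij_is_inj)
    then show ?thesis using carrier_IET by auto
  qed
qed

lemma inv_IET: assumes "is_iet f" shows "inv\<^bsub>IET\<^esub> f = inv_into UNIV f"
proof -
  have "is_iet (inv_into UNIV f)" "inv_into UNIV f \<circ> f = id"
    using iet_inv iet_bij assms by (auto simp add: bij_is_inj)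
  then show ?thesis using group.inv_equality[OF group_IET] assms carrier_IET by auto
qed



definition sh :: "real \<Rightarrow> int" where "sh x = \<lfloor>3 * x\<rfloor>"
definition th :: "real \<Rightarrow> real" where "th x = 3 * x - of_int \<lfloor>3 * x\<rfloor>"
definition enc :: "int \<Rightarrow> real \<Rightarrow> real" where "enc j t = (of_int j + t) / 3"

lemma th_range: "0 \<le> th x" "th x < 1"
  unfolding th_def by linarith+

lemma sh_range: "x \<in> {0..<1} \<Longrightarrow> 0 \<le> sh x \<and> sh x \<le> 2"
  unfolding sh_def by (auto simp: floor_le_iff)

lemma enc_sh_th [simp]: "enc (sh x) (th x) = x"
  unfolding enc_def sh_def th_def by simp

lemma three_enc: "3 * enc j t = of_int j + t" unfolding enc_def by simp

lemma sh_enc [simp]: "0 \<le> t \<Longrightarrow> t < 1 \<Longrightarrow> sh (enc j t) = j"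
  unfolding sh_def three_enc by (simp add: floor_eq_iff)

lemma th_enc [simp]: "0 \<le> t \<Longrightarrow> t < 1 \<Longrightarrow> th (enc j t) = t"
proof -
  assume "0 \<le> t" "t < 1"
  then have "\<lfloor>3 * enc j t\<rfloor> = j" using sh_enc unfolding sh_def by blast
  then show ?thesis unfolding th_def three_enc by simp
qed

lemma enc_in: assumes "0 \<le> j" "j \<le> 2" "0 \<le> t" "t < 1" shows "enc j t \<in> {0..<1}"
proof -
  have "0 \<le> real_of_int j" "real_of_int j \<le> 2" using assms by simp_all
  then show ?thesis using assms unfolding enc_def by simp
qed

lemma enc_in_mod: "0 \<le> t \<Longrightarrow> t < 1 \<Longrightarrow> enc (j mod 3) t \<in> {0..<1}"
  by (rule enc_in) auto

lemma enc_eq_iff: "0 \<le> t \<Longrightarrow> t < 1 \<Longrightarrow> 0 \<le> t' \<Longrightarrow> t' < 1 \<Longrightarrow>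
    enc j t = enc j' t' \<longleftrightarrow> j = j' \<and> t = t'"
  by (metis sh_enc th_enc)

lemma in_enc: "x \<in> {0..<1} \<Longrightarrow> \<exists>j t. x = enc j t \<and> 0 \<le> j \<and> j \<le> 2 \<and> 0 \<le> t \<and> t < 1"
  using sh_range th_range enc_sh_th by metis

definition rot :: "real \<Rightarrow> real \<Rightarrow> real" where
  "rot s x = (if x \<in> {0..<1} then enc (sh x) (frac (th x + s)) else x)"

definition lam :: "(real \<Rightarrow> int) \<Rightarrow> (real \<Rightarrow> int) \<Rightarrow> real \<Rightarrow> real" where
  "lam e c x = (if x \<in> {0..<1} then enc ((e (th x) * sh x + c (th x)) mod 3) (th x) else x)"

lemma rot_enc [simp]: "0 \<le> j \<Longrightarrow> j \<le> 2 \<Longrightarrow> 0 \<le> t \<Longrightarrow> t < 1 \<Longrightarrow>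
    rot s (enc j t) = enc j (frac (t + s))"
  unfolding rot_def using enc_in by simp

lemma lam_enc [simp]: "0 \<le> j \<Longrightarrow> j \<le> 2 \<Longrightarrow> 0 \<le> t \<Longrightarrow> t < 1 \<Longrightarrow>
    lam e c (enc j t) = enc ((e t * j + c t) mod 3) t"
  unfolding lam_def using enc_in by simp

lemma rot_out [simp]: "x \<notin> {0..<1} \<Longrightarrow> rot s x = x" unfolding rot_def by auto
lemma lam_out [simp]: "x \<notin> {0..<1} \<Longrightarrow> lam e c x = x" unfolding lam_def by auto

lemma rot_in: assumes "x \<in> {0..<1}" shows "rot s x \<in> {0..<1}"
proof -
  have "0 \<le> sh x" "sh x \<le> 2" using sh_range assms by auto
  then show ?thesis using assms enc_in[of "sh x" "frac (th x + s)", OF _ _ frac_ge_0 frac_lt_1] by (simp add: rot_def)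
qed

lemma lam_in: "x \<in> {0..<1} \<Longrightarrow> lam e c x \<in> {0..<1}"
  unfolding lam_def using enc_in_mod th_range by auto

lemma frac_frac_add: "frac (frac a + b) = frac (a + b)"
proof -
  have "frac a + b = (a + b) + of_int (- \<lfloor>a\<rfloor>)" unfolding frac_def by simp
  then show ?thesis by (metis frac_add_of_int_right)
qed

lemma rot_rot: "rot s (rot t x) = rot (t + s) x"
proof (cases "x \<in> {0..<1}")
  case True
  then obtain j u where x: "x = enc j u" "0 \<le> j" "j \<le> 2" "0 \<le> u" "u < 1" using in_enc by blast
  then show ?thesis using frac_frac_add[of "u + t" s] by (simp add: add.assoc frac_lt_1)
qed simp

lemma rot_zero: "rot 0 x = x"
proof (cases "x \<in> {0..<1}")
  case True
  then obtain j u where x: "x = enc j u" "0 \<le> j" "j \<le> 2" "0 \<le> u" "u < 1" using in_enc by blast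
  then show ?thesis by simp
qed simp

lemma rot_comp: "rot s \<circ> rot t = rot (t + s)"
  by (rule ext) (simp add: rot_rot)

lemma rot_zero_id: "rot 0 = id"
  by (rule ext) (simp add: rot_zero)

lemma iet_sheetI:
  assumes bij: "bij_betw F {0..<1} {0..<1}" and out: "\<forall>x. x \<notin> {0..<1} \<longrightarrow> F x = x"
    and D: "finite D"
    and disp: "\<And>x y. 0 \<le> x \<Longrightarrow> x \<le> y \<Longrightarrow> y < 1 \<Longrightarrow> sh x = sh y \<Longrightarrow>
        (\<forall>d\<in>D. \<not> (th x < d \<and> d \<le> th y)) \<Longrightarrow> F y - y = F x - x"
  shows "is_iet F"
proof -
  define B where "B = {1/3, 2/3} \<union> (\<lambda>(j, d). (of_int j + d) / 3) ` ({0, 1, 2::int} \<times> D)"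
  have "brk F B" unfolding brk_def
  proof (intro conjI allI impI)
    show "finite B" unfolding B_def using D by simp
    fix x y :: real
    assume xy: "0 \<le> x" "x \<le> y" "y < 1" "\<forall>b\<in>B. \<not> (x < b \<and> b \<le> y)"
    have shle: "sh x \<le> sh y" unfolding sh_def using xy by (simp add: floor_mono)
    have shx: "0 \<le> sh x" "sh x \<le> 2" "0 \<le> sh y" "sh y \<le> 2" using sh_range xy by auto
    have sheq: "sh x = sh y"
    proof (rule ccontr)
      assume "sh x \<noteq> sh y"
      then have lt: "sh x < sh y" using shle by simp
      define b where "b = (of_int (sh x + 1) :: real) / 3"
      have "3 * x < of_int \<lfloor>3 * x\<rfloor> + 1" using floor_le_iff[of "3*x" "\<lfloor>3*x\<rfloor>"] by simp
      then have "x < b" unfolding b_def sh_def by (simp add: field_simps mult.commute)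
      moreover have "b \<le> y"
      proof -
        have h1: "\<lfloor>3*x\<rfloor> + 1 \<le> \<lfloor>3*y\<rfloor>" using lt unfolding sh_def by simp
        have h2: "real_of_int (\<lfloor>3*y\<rfloor>) \<le> 3*y" by (rule of_int_floor_le)
        have "real_of_int (\<lfloor>3*x\<rfloor>+1) \<le> real_of_int \<lfloor>3*y\<rfloor>" using h1 by (simp only: of_int_le_iff)
        then have "real_of_int (\<lfloor>3*x\<rfloor>+1) \<le> 3*y" using h2 by linarith
        then show ?thesis unfolding b_def sh_def by simp
      qed
      moreover have "b \<in> B"
      proof -
        have "sh x + 1 = 1 \<or> sh x + 1 = 2" using lt shx by linarith
        then show ?thesis unfolding B_def b_def by auto
      qed
      ultimately show False using xy(4) by blast
    qed
    have "\<forall>d\<in>D. \<not> (th x < d \<and> d \<le> th y)"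
    proof (intro ballI notI)
      fix d assume d: "d \<in> D" "th x < d \<and> d \<le> th y"
      define b where "b = (of_int (sh x) + d) / 3"
      have "sh x \<in> {0,1,2}" using shx by auto
      then have "b \<in> B" unfolding B_def b_def using d by force
      moreover have "x < b" "b \<le> y" using d sheq unfolding b_def th_def sh_def by auto
      ultimately show False using xy(4) by blast
    qed
    then show "F y - y = F x - x" using disp[OF xy(1) xy(2) xy(3) sheq] by blast
  qed
  then show ?thesis using brk_imp_iet bij out by blast
qed

lemma rot_iet: "is_iet (rot s)"
proof (rule iet_sheetI[where D = "{1 - frac s}"])
  show "bij_betw (rot s) {0..<1} {0..<1}"
  proof (rule bij_betw_byWitness[where f' = "rot (- s)"])
    show "\<forall>a\<in>{0..<1}. rot (- s) (rot s a) = a" by (simp add: rot_rot rot_zero)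
    show "\<forall>a\<in>{0..<1}. rot s (rot (- s) a) = a" by (simp add: rot_rot rot_zero)
    show "rot s ` {0..<1} \<subseteq> {0..<1}" using rot_in by blast
    show "rot (- s) ` {0..<1} \<subseteq> {0..<1}" using rot_in by blast
  qed
  show "\<forall>x. x \<notin> {0..<1} \<longrightarrow> rot s x = x" by simp
  show "finite {1 - frac s}" by simp
  fix x y :: real
  assume xy: "0 \<le> x" "x \<le> y" "y < 1" "sh x = sh y"
    "\<forall>d\<in>{1 - frac s}. \<not> (th x < d \<and> d \<le> th y)"
  have thle: "th x \<le> th y" using xy unfolding th_def sh_def by simp
  have fx: "frac (th x + s) = (if th x + frac s < 1 then th x + frac s else th x + frac s - 1)"
    using frac_add[of "th x" s] th_range by (simp add: frac_eq)
  have fy: "frac (th y + s) = (if th y + frac s < 1 then th y + frac s else th y + frac s - 1)"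
    using frac_add[of "th y" s] th_range by (simp add: frac_eq)
  have same: "th x + frac s < 1 \<longleftrightarrow> th y + frac s < 1" using xy thle by auto
  have kx: "of_int (sh x) + th x = 3 * x" "of_int (sh y) + th y = 3 * y" by (simp_all add: sh_def th_def)
  have "rot s x - x = (frac (th x + s) - th x) / 3"
    using xy kx(1) by (simp add: rot_def enc_def field_simps)
  moreover have "rot s y - y = (frac (th y + s) - th y) / 3"
    using xy kx(2) by (simp add: rot_def enc_def field_simps)
  ultimately show "rot s y - y = rot s x - x" using fx fy same xy by auto
qed

definition pw_const :: "(real \<Rightarrow> int) \<Rightarrow> real set \<Rightarrow> bool" where
  "pw_const e D \<longleftrightarrow> (\<forall>t1 t2. 0 \<le> t1 \<longrightarrow> t1 \<le> t2 \<longrightarrow> t2 < 1 \<longrightarrow>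
      (\<forall>d\<in>D. \<not> (t1 < d \<and> d \<le> t2)) \<longrightarrow> e t1 = e t2)"

lemma lam_lam: "lam e1 c1 (lam e2 c2 x) =
   lam (\<lambda>t. e1 t * e2 t) (\<lambda>t. e1 t * c2 t + c1 t) x"
proof (cases "x \<in> {0..<1}")
  case True
  then obtain j u where x: "x = enc j u" "0 \<le> j" "j \<le> 2" "0 \<le> u" "u < 1" using in_enc by blast
  have "(e1 u * ((e2 u * j + c2 u) mod 3) + c1 u) mod 3 = (e1 u * (e2 u * j + c2 u) + c1 u) mod 3"
    by (metis mod_add_left_eq mod_mult_right_eq)
  also have "\<dots> = (e1 u * e2 u * j + (e1 u * c2 u + c1 u)) mod 3"
    by (simp add: algebra_simps)
  finally have "(e1 u * ((e2 u * j + c2 u) mod 3) + c1 u) mod 3 = (e1 u * e2 u * j + (e1 u * c2 u + c1 u)) mod 3" .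
  then show ?thesis using x by simp
qed simp

lemma lam_id: "lam (\<lambda>t. 1) (\<lambda>t. 0) x = x"
proof (cases "x \<in> {0..<1}")
  case True
  then obtain j u where x: "x = enc j u" "0 \<le> j" "j \<le> 2" "0 \<le> u" "u < 1" using in_enc by blast
  then show ?thesis by simp
qed simp

lemma lam_cong: "(\<And>t. 0 \<le> t \<Longrightarrow> t < 1 \<Longrightarrow> e t = e' t) \<Longrightarrow> (\<And>t. 0 \<le> t \<Longrightarrow> t < 1 \<Longrightarrow> c t mod 3 = c' t mod 3)
   \<Longrightarrow> lam e c x = lam e' c' x"
proof (cases "x \<in> {0..<1}")
  case True
  assume h: "\<And>t. 0 \<le> t \<Longrightarrow> t < 1 \<Longrightarrow> e t = e' t" "\<And>t. 0 \<le> t \<Longrightarrow> t < 1 \<Longrightarrow> c t mod 3 = c' t mod 3"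
  obtain j u where x: "x = enc j u" "0 \<le> j" "j \<le> 2" "0 \<le> u" "u < 1" using in_enc True by blast
  have "(e u * j + c u) mod 3 = (e' u * j + c' u) mod 3" using h x
    by (metis mod_add_right_eq)
  then show ?thesis using x by simp
qed simp

lemma lam_inv_lam:
  assumes e: "\<And>t. e t = 1 \<or> e t = -1"
  shows "lam e (\<lambda>t. - (e t * c t)) (lam e c x) = x"
proof -
  have "lam e (\<lambda>t. - (e t * c t)) (lam e c x) = lam (\<lambda>t. e t * e t) (\<lambda>t. e t * c t + - (e t * c t)) x"
    by (simp add: lam_lam)
  also have "\<dots> = lam (\<lambda>t. 1) (\<lambda>t. 0) x"
  proof (rule lam_cong)
    fix t
    show "e t * e t = 1" using e[of t] by auto
    show "(e t * c t + - (e t * c t)) mod 3 = 0 mod 3" by simp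
  qed
  finally show ?thesis by (simp add: lam_id)
qed

lemma lam_lam_inv:
  assumes e: "\<And>t. e t = 1 \<or> e t = -1"
  shows "lam e c (lam e (\<lambda>t. - (e t * c t)) x) = x"
proof -
  have "lam e c (lam e (\<lambda>t. - (e t * c t)) x) = lam (\<lambda>t. e t * e t) (\<lambda>t. e t * - (e t * c t) + c t) x"
    by (simp add: lam_lam)
  also have "\<dots> = lam (\<lambda>t. 1) (\<lambda>t. 0) x"
  proof (rule lam_cong)
    fix t
    have "e t * e t = 1" using e[of t] by auto
    then show "e t * e t = 1" .
    have "e t * (e t * c t) = c t" using \<open>e t * e t = 1\<close> by (metis mult.assoc mult_1)
    then have "e t * - (e t * c t) + c t = 0" by simp
    then show "(e t * - (e t * c t) + c t) mod 3 = 0 mod 3" by (simp only:)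
  qed
  finally show ?thesis by (simp add: lam_id)
qed

lemma lam_iet:
  assumes e: "\<And>t. e t = 1 \<or> e t = -1" and D: "finite D" and pe: "pw_const e D" and pc: "pw_const c D"
  shows "is_iet (lam e c)"
proof (rule iet_sheetI[where D = D])
  show "bij_betw (lam e c) {0..<1} {0..<1}"
  proof (rule bij_betw_byWitness[where f' = "lam e (\<lambda>t. - (e t * c t))"])
    show "\<forall>a\<in>{0..<1}. lam e (\<lambda>t. - (e t * c t)) (lam e c a) = a" using lam_inv_lam e by blast
    show "\<forall>a\<in>{0..<1}. lam e c (lam e (\<lambda>t. - (e t * c t)) a) = a" using lam_lam_inv e by blast
    show "lam e c ` {0..<1} \<subseteq> {0..<1}" using lam_in by blast
    show "lam e (\<lambda>t. - (e t * c t)) ` {0..<1} \<subseteq> {0..<1}" using lam_in by blast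
  qed
  show "\<forall>x. x \<notin> {0..<1} \<longrightarrow> lam e c x = x" by simp
  show "finite D" by fact
  fix x y :: real
  assume xy: "0 \<le> x" "x \<le> y" "y < 1" "sh x = sh y" "\<forall>d\<in>D. \<not> (th x < d \<and> d \<le> th y)"
  have thle: "th x \<le> th y" using xy unfolding th_def sh_def by simp
  have ec: "e (th x) = e (th y)" "c (th x) = c (th y)"
    using pe pc xy thle th_range unfolding pw_const_def by blast+
  have kx: "of_int (sh x) + th x = 3 * x" "of_int (sh y) + th y = 3 * y" by (simp_all add: sh_def th_def)
  have "lam e c x - x = (of_int ((e (th x) * sh x + c (th x)) mod 3) - of_int (sh x)) / 3"
    using xy kx(1) by (simp add: lam_def enc_def field_simps)
  moreover have "lam e c y - y = (of_int ((e (th y) * sh y + c (th y)) mod 3) - of_int (sh y)) / 3"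
    using xy kx(2) by (simp add: lam_def enc_def field_simps)
  ultimately show "lam e c y - y = lam e c x - x" using ec xy by simp
qed



lemma car_iet: "h \<in> carrier IET \<Longrightarrow> is_iet h" using carrier_IET by auto

lemma invi_r: "is_iet h \<Longrightarrow> h (inv_into UNIV h y) = y"
  using iet_bij by (meson bij_inv_eq_iff)
lemma invi_l: "is_iet h \<Longrightarrow> inv_into UNIV h (h x) = x"
  using iet_bij by (simp add: bij_is_inj)

definition isq :: "(real \<Rightarrow> real) \<Rightarrow> real \<Rightarrow> (real \<Rightarrow> int) \<Rightarrow> (real \<Rightarrow> int) \<Rightarrow> bool" where
  "isq h t e c \<longleftrightarrow> (\<forall>u\<in>{0..<1}. e u = 1 \<or> e u = -1) \<and>
     (\<forall>x\<in>{0..<1}. th (h x) = frac (th x + t) \<and> sh (h x) = (e (th x) * sh x + c (th x)) mod 3)"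

lemma th_in: "th x \<in> {0..<1}" using th_range by auto

lemma isq_comp:
  assumes a: "isq a s ea ca" and b: "isq b t eb cb" and bin: "\<And>x. x \<in> {0..<1} \<Longrightarrow> b x \<in> {0..<1}"
  shows "isq (a \<circ> b) (t + s) (\<lambda>u. ea (frac (u + t)) * eb u) (\<lambda>u. ea (frac (u + t)) * cb u + ca (frac (u + t)))"
  unfolding isq_def
proof (intro conjI ballI)
  fix u :: real assume u: "u \<in> {0..<1}"
  have "frac (u + t) \<in> {0..<1}" using frac_lt_1 by simp
  then have "ea (frac (u + t)) = 1 \<or> ea (frac (u + t)) = -1" using a unfolding isq_def by blast
  moreover have "eb u = 1 \<or> eb u = -1" using b u unfolding isq_def by blast
  ultimately show "ea (frac (u + t)) * eb u = 1 \<or> ea (frac (u + t)) * eb u = -1" by auto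
next
  fix x :: real assume x: "x \<in> {0..<1}"
  have bx: "b x \<in> {0..<1}" using bin x .
  have tb: "th (b x) = frac (th x + t)" and sb: "sh (b x) = (eb (th x) * sh x + cb (th x)) mod 3"
    using b x unfolding isq_def by auto
  have ta: "th (a (b x)) = frac (th (b x) + s)" and sa: "sh (a (b x)) = (ea (th (b x)) * sh (b x) + ca (th (b x))) mod 3"
    using a bx unfolding isq_def by auto
  show "th ((a \<circ> b) x) = frac (th x + (t + s))"
    using ta tb frac_frac_add[of "th x + t" s] by (simp add: add.assoc)
  define E where "E = ea (frac (th x + t))"
  define C where "C = ca (frac (th x + t))"
  have "sh ((a \<circ> b) x) = (E * ((eb (th x) * sh x + cb (th x)) mod 3) + C) mod 3"
    using sa sb tb unfolding E_def C_def by simp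
  also have "\<dots> = (E * (eb (th x) * sh x + cb (th x)) + C) mod 3"
    by (metis mod_add_left_eq mod_mult_right_eq)
  also have "\<dots> = (E * eb (th x) * sh x + (E * cb (th x) + C)) mod 3"
    by (simp add: algebra_simps)
  finally show "sh ((a \<circ> b) x) = ((ea (frac (th x + t)) * eb (th x)) * sh x +
      (ea (frac (th x + t)) * cb (th x) + ca (frac (th x + t)))) mod 3"
    unfolding E_def C_def .
qed

lemma isq_inv:
  assumes h: "isq h t e c" and hi: "is_iet h"
  shows "isq (inv_into UNIV h) (- t) (\<lambda>u. e (frac (u - t))) (\<lambda>u. - (e (frac (u - t)) * c (frac (u - t))))"
  unfolding isq_def
proof (intro conjI ballI)
  fix u :: real assume u: "u \<in> {0..<1}"
  have "frac (u - t) \<in> {0..<1}" using frac_lt_1 by simp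
  then show "e (frac (u - t)) = 1 \<or> e (frac (u - t)) = -1" using h unfolding isq_def by blast
next
  fix y :: real assume y: "y \<in> {0..<1}"
  define x where "x = inv_into UNIV h y"
  have x: "x \<in> {0..<1}" unfolding x_def using iet_inv_in[OF hi y] .
  have hx: "h x = y" unfolding x_def using invi_r[OF hi] .
  have ty: "th y = frac (th x + t)" and sy: "sh y = (e (th x) * sh x + c (th x)) mod 3"
    using h x hx unfolding isq_def by auto
  have thx: "th x = frac (th y - t)"
  proof -
    have "frac (th y - t) = frac (frac (th x + t) + - t)" using ty by simp
    also have "\<dots> = frac (th x)" using frac_frac_add[of "th x + t" "- t"] by simp
    also have "\<dots> = th x" using th_in by simp
    finally show ?thesis by simp
  qed
  show "th (inv_into UNIV h y) = frac (th y + - t)" using thx x_def by simp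
  define E where "E = e (th x)"
  define C where "C = c (th x)"
  have EE: "E * E = 1"
  proof -
    have "E = 1 \<or> E = -1" using h th_in unfolding isq_def E_def by blast
    then show ?thesis by auto
  qed
  have shx: "0 \<le> sh x" "sh x \<le> 2" using sh_range x by auto
  have "(E * sh y + - (E * C)) mod 3 = (E * (E * sh x + C) + - (E * C)) mod 3"
    using sy unfolding E_def C_def by (metis mod_add_left_eq mod_mult_right_eq)
  also have "\<dots> = ((E * E) * sh x) mod 3" by (simp add: algebra_simps)
  also have "\<dots> = sh x" using EE shx by simp
  finally have "sh x = (E * sh y + - (E * C)) mod 3" by simp
  then show "sh (inv_into UNIV h y) = (e (frac (th y - t)) * sh y + - (e (frac (th y - t)) * c (frac (th y - t)))) mod 3"
    using thx unfolding x_def E_def C_def by simp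
qed

lemma isq_cong:
  assumes "isq h t e c" and "\<And>u. u \<in> {0..<1} \<Longrightarrow> frac (u + t') = frac (u + t)"
    and "\<And>u. u \<in> {0..<1} \<Longrightarrow> e' u = e u" and "\<And>u. u \<in> {0..<1} \<Longrightarrow> c' u mod 3 = c u mod 3"
  shows "isq h t' e' c'"
  unfolding isq_def
proof (intro conjI ballI)
  fix u :: real assume "u \<in> {0..<1}"
  then show "e' u = 1 \<or> e' u = -1" using assms(1,3) unfolding isq_def by auto
next
  fix x :: real assume x: "x \<in> {0..<1}"
  have 1: "th (h x) = frac (th x + t)" "sh (h x) = (e (th x) * sh x + c (th x)) mod 3"
    using assms(1) x unfolding isq_def by auto
  have 2: "frac (th x + t') = frac (th x + t)" using assms(2) th_in by blast
  have 3: "e' (th x) = e (th x)" using assms(3) th_in by blast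
  have 4: "c' (th x) mod 3 = c (th x) mod 3" using assms(4) th_in by blast
  have "(e' (th x) * sh x + c' (th x)) mod 3 = (e (th x) * sh x + c (th x)) mod 3"
    using 3 4 by (metis mod_add_right_eq)
  then show "th (h x) = frac (th x + t')" "sh (h x) = (e' (th x) * sh x + c' (th x)) mod 3"
    using 1 2 by simp_all
qed

lemma sh_mod: "x \<in> {0..<1} \<Longrightarrow> sh x mod 3 = sh x"
  using sh_range[of x] by (intro mod_pos_pos_trivial) auto

lemma isq_id: "isq id 0 (\<lambda>u. 1) (\<lambda>u. 0)"
  unfolding isq_def using th_in sh_mod by auto

definition Q0 :: "(real \<Rightarrow> real) set" where
  "Q0 = {h. h \<in> carrier IET \<and> (\<exists>t e c. isq h t e c)}"
definition Q1 :: "(real \<Rightarrow> real) set" where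
  "Q1 = {h. h \<in> carrier IET \<and> (\<exists>e c. isq h 0 e c)}"
definition Q2 :: "(real \<Rightarrow> real) set" where
  "Q2 = {h. h \<in> carrier IET \<and> (\<exists>c. isq h 0 (\<lambda>u. 1) c)}"

lemma car_in: "h \<in> carrier IET \<Longrightarrow> x \<in> {0..<1} \<Longrightarrow> h x \<in> {0..<1}"
  using car_iet iet_in by blast

lemma IET_comp_closed: "a \<in> carrier IET \<Longrightarrow> b \<in> carrier IET \<Longrightarrow> a \<circ> b \<in> carrier IET"
  using iet_comp carrier_IET by auto

lemma IET_inv_closed: "a \<in> carrier IET \<Longrightarrow> inv_into UNIV a \<in> carrier IET"
  using iet_inv carrier_IET by auto

lemma inv_IET': "a \<in> carrier IET \<Longrightarrow> inv\<^bsub>IET\<^esub> a = inv_into UNIV a"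
  using inv_IET car_iet by blast

lemma subgroup_Q0: "subgroup Q0 IET"
proof (rule group.subgroupI[OF group_IET])
  show "Q0 \<subseteq> carrier IET" unfolding Q0_def by auto
  show "Q0 \<noteq> {}" unfolding Q0_def using isq_id iet_id carrier_IET by auto
  fix a assume a: "a \<in> Q0"
  then obtain t e c where "isq a t e c" "a \<in> carrier IET" unfolding Q0_def by auto
  then show "inv\<^bsub>IET\<^esub> a \<in> Q0" unfolding Q0_def
    using isq_inv[of a t e c] car_iet inv_IET' IET_inv_closed by fastforce
next
  fix a b assume a: "a \<in> Q0" and b: "b \<in> Q0"
  then obtain s ea ca t eb cb where "isq a s ea ca" "a \<in> carrier IET" "isq b t eb cb" "b \<in> carrier IET"
    unfolding Q0_def by auto
  then show "a \<otimes>\<^bsub>IET\<^esub> b \<in> Q0" unfolding Q0_def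
    using isq_comp[of a s ea ca b t eb cb] car_in IET_comp_closed by fastforce
qed

lemma subgroup_Q1: "subgroup Q1 IET"
proof (rule group.subgroupI[OF group_IET])
  show "Q1 \<subseteq> carrier IET" unfolding Q1_def by auto
  show "Q1 \<noteq> {}" unfolding Q1_def using isq_id iet_id carrier_IET by auto
  fix a assume a: "a \<in> Q1"
  then obtain e c where "isq a 0 e c" "a \<in> carrier IET" unfolding Q1_def by auto
  then show "inv\<^bsub>IET\<^esub> a \<in> Q1" unfolding Q1_def
    using isq_inv[of a 0 e c] car_iet inv_IET' IET_inv_closed by fastforce
next
  fix a b assume a: "a \<in> Q1" and b: "b \<in> Q1"
  then obtain ea ca eb cb where "isq a 0 ea ca" "a \<in> carrier IET" "isq b 0 eb cb" "b \<in> carrier IET"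
    unfolding Q1_def by auto
  then show "a \<otimes>\<^bsub>IET\<^esub> b \<in> Q1" unfolding Q1_def
    using isq_comp[of a 0 ea ca b 0 eb cb] car_in IET_comp_closed by fastforce
qed

lemma subgroup_Q2: "subgroup Q2 IET"
proof (rule group.subgroupI[OF group_IET])
  show "Q2 \<subseteq> carrier IET" unfolding Q2_def by auto
  show "Q2 \<noteq> {}" unfolding Q2_def using isq_id iet_id carrier_IET by auto
  fix a assume a: "a \<in> Q2"
  then obtain c where "isq a 0 (\<lambda>u. 1) c" "a \<in> carrier IET" unfolding Q2_def by auto
  then show "inv\<^bsub>IET\<^esub> a \<in> Q2" unfolding Q2_def
    using isq_inv[of a 0 "\<lambda>u. 1" c] car_iet inv_IET' IET_inv_closed by fastforce
next
  fix a b assume a: "a \<in> Q2" and b: "b \<in> Q2"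
  then obtain ca cb where "isq a 0 (\<lambda>u. 1) ca" "a \<in> carrier IET" "isq b 0 (\<lambda>u. 1) cb" "b \<in> carrier IET"
    unfolding Q2_def by auto
  then show "a \<otimes>\<^bsub>IET\<^esub> b \<in> Q2" unfolding Q2_def
    using isq_comp[of a 0 "\<lambda>u. 1" ca b 0 "\<lambda>u. 1" cb] car_in IET_comp_closed by fastforce
qed



(* Commutators and derived series bounds *)

lemma isq0_comp:
  assumes "isq a 0 ea ca" "isq b 0 eb cb" "\<And>x. x \<in> {0..<1} \<Longrightarrow> b x \<in> {0..<1}"
  shows "\<exists>c. isq (a \<circ> b) 0 (\<lambda>u. ea u * eb u) c"
proof -
  have "isq (a \<circ> b) (0 + 0) (\<lambda>u. ea (frac (u + 0)) * eb u) (\<lambda>u. ea (frac (u + 0)) * cb u + ca (frac (u + 0)))"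
    using isq_comp[OF assms] .
  then have "isq (a \<circ> b) 0 (\<lambda>u. ea u * eb u) (\<lambda>u. ea (frac (u + 0)) * cb u + ca (frac (u + 0)))"
    by (rule isq_cong) auto
  then show ?thesis by blast
qed

lemma isq0_inv:
  assumes "isq h 0 e c" "is_iet h"
  shows "\<exists>c'. isq (inv_into UNIV h) 0 e c'"
proof -
  have "isq (inv_into UNIV h) (- 0) (\<lambda>u. e (frac (u - 0))) (\<lambda>u. - (e (frac (u - 0)) * c (frac (u - 0))))"
    using isq_inv[OF assms] .
  then have "isq (inv_into UNIV h) 0 e (\<lambda>u. - (e (frac (u - 0)) * c (frac (u - 0))))"
    by (rule isq_cong) auto
  then show ?thesis by blast
qed

lemma comm_IET: "a \<in> carrier IET \<Longrightarrow> b \<in> carrier IET \<Longrightarrow>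
  a \<otimes>\<^bsub>IET\<^esub> b \<otimes>\<^bsub>IET\<^esub> inv\<^bsub>IET\<^esub> a \<otimes>\<^bsub>IET\<^esub> inv\<^bsub>IET\<^esub> b = ((a \<circ> b) \<circ> inv_into UNIV a) \<circ> inv_into UNIV b"
  by (simp add: inv_IET')

lemma comm_Q0: assumes a: "a \<in> Q0" and b: "b \<in> Q0"
  shows "a \<otimes>\<^bsub>IET\<^esub> b \<otimes>\<^bsub>IET\<^esub> inv\<^bsub>IET\<^esub> a \<otimes>\<^bsub>IET\<^esub> inv\<^bsub>IET\<^esub> b \<in> Q1"
proof -
  obtain s ea ca t eb cb where qa: "isq a s ea ca" "a \<in> carrier IET" and qb: "isq b t eb cb" "b \<in> carrier IET"
    using a b unfolding Q0_def by auto
  define ia where "ia = inv_into UNIV a"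
  define ib where "ib = inv_into UNIV b"
  have ca: "ia \<in> carrier IET" "ib \<in> carrier IET" unfolding ia_def ib_def using IET_inv_closed qa qb by auto
  obtain E1 C1 where 1: "isq (a \<circ> b) (t + s) E1 C1" using isq_comp[OF qa(1) qb(1)] car_in qb(2) by blast
  obtain Ea Ca where 2: "isq ia (- s) Ea Ca" using isq_inv[OF qa(1)] car_iet qa(2) unfolding ia_def by blast
  obtain Eb Cb where 3: "isq ib (- t) Eb Cb" using isq_inv[OF qb(1)] car_iet qb(2) unfolding ib_def by blast
  obtain E2 C2 where 4: "isq ((a \<circ> b) \<circ> ia) (- s + (t + s)) E2 C2"
    using isq_comp[OF 1 2] car_in ca by blast
  obtain E3 C3 where 5: "isq (((a \<circ> b) \<circ> ia) \<circ> ib) (- t + (- s + (t + s))) E3 C3"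
    using isq_comp[OF 4 3] car_in ca by blast
  have "isq (((a \<circ> b) \<circ> ia) \<circ> ib) 0 E3 C3" using 5 by (rule isq_cong) auto
  moreover have "((a \<circ> b) \<circ> ia) \<circ> ib \<in> carrier IET" using IET_comp_closed qa qb ca by auto
  ultimately show ?thesis unfolding Q1_def comm_IET[OF qa(2) qb(2)] ia_def ib_def by blast
qed

lemma comm_Q1: assumes a: "a \<in> Q1" and b: "b \<in> Q1"
  shows "a \<otimes>\<^bsub>IET\<^esub> b \<otimes>\<^bsub>IET\<^esub> inv\<^bsub>IET\<^esub> a \<otimes>\<^bsub>IET\<^esub> inv\<^bsub>IET\<^esub> b \<in> Q2"
proof -
  obtain ea ca eb cb where qa: "isq a 0 ea ca" "a \<in> carrier IET" and qb: "isq b 0 eb cb" "b \<in> carrier IET"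
    using a b unfolding Q1_def by auto
  define ia where "ia = inv_into UNIV a"
  define ib where "ib = inv_into UNIV b"
  have ca: "ia \<in> carrier IET" "ib \<in> carrier IET" unfolding ia_def ib_def using IET_inv_closed qa qb by auto
  obtain C1 where 1: "isq (a \<circ> b) 0 (\<lambda>u. ea u * eb u) C1" using isq0_comp[OF qa(1) qb(1)] car_in qb(2) by blast
  obtain Ca where 2: "isq ia 0 ea Ca" using isq0_inv[OF qa(1)] car_iet qa(2) unfolding ia_def by blast
  obtain Cb where 3: "isq ib 0 eb Cb" using isq0_inv[OF qb(1)] car_iet qb(2) unfolding ib_def by blast
  obtain C2 where 4: "isq ((a \<circ> b) \<circ> ia) 0 (\<lambda>u. ea u * eb u * ea u) C2"
    using isq0_comp[OF 1 2] car_in ca by blast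
  obtain C3 where 5: "isq (((a \<circ> b) \<circ> ia) \<circ> ib) 0 (\<lambda>u. ea u * eb u * ea u * eb u) C3"
    using isq0_comp[OF 4 3] car_in ca by blast
  have "isq (((a \<circ> b) \<circ> ia) \<circ> ib) 0 (\<lambda>u. 1) C3"
  proof (rule isq_cong[OF 5])
    fix u :: real assume u: "u \<in> {0..<1}"
    have "ea u = 1 \<or> ea u = -1" "eb u = 1 \<or> eb u = -1" using qa qb u unfolding isq_def by auto
    then show "1 = ea u * eb u * ea u * eb u" by auto
  qed auto
  moreover have "((a \<circ> b) \<circ> ia) \<circ> ib \<in> carrier IET" using IET_comp_closed qa qb ca by auto
  ultimately show ?thesis unfolding Q2_def comm_IET[OF qa(2) qb(2)] ia_def ib_def by blast
qed

lemma Q2_commute: assumes a: "a \<in> Q2" and b: "b \<in> Q2" shows "a \<circ> b = b \<circ> a"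
proof
  fix x
  obtain ca cb where qa: "isq a 0 (\<lambda>u. 1) ca" "a \<in> carrier IET" and qb: "isq b 0 (\<lambda>u. 1) cb" "b \<in> carrier IET"
    using a b unfolding Q2_def by auto
  show "(a \<circ> b) x = (b \<circ> a) x"
  proof (cases "x \<in> {0..<1}")
    case False
    have "a x = x" "b x = x" using iet_out[OF car_iet[OF qa(2)] False] iet_out[OF car_iet[OF qb(2)] False] by auto
    then show ?thesis by simp
  next
    case True
    have bx: "b x \<in> {0..<1}" "a x \<in> {0..<1}" using car_in qa qb True by auto
    have fr: "frac (th x + 0) = th x" using th_in by simp
    have tb: "th (b x) = th x" "sh (b x) = (sh x + cb (th x)) mod 3" using qb True fr unfolding isq_def by auto
    have ta: "th (a x) = th x" "sh (a x) = (sh x + ca (th x)) mod 3" using qa True fr unfolding isq_def by auto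
    have tab: "th (a (b x)) = th x" "sh (a (b x)) = (sh (b x) + ca (th x)) mod 3"
      using qa bx tb fr unfolding isq_def by auto
    have tba: "th (b (a x)) = th x" "sh (b (a x)) = (sh (a x) + cb (th x)) mod 3"
      using qb bx ta fr unfolding isq_def by auto
    have "sh (a (b x)) = (sh x + cb (th x) + ca (th x)) mod 3"
      using tab(2) tb(2) by (simp add: mod_add_left_eq)
    moreover have "sh (b (a x)) = (sh x + cb (th x) + ca (th x)) mod 3"
    proof -
      have "sh (b (a x)) = ((sh x + ca (th x)) mod 3 + cb (th x)) mod 3" using tba(2) ta(2) by simp
      also have "\<dots> = (sh x + ca (th x) + cb (th x)) mod 3" by (simp add: mod_add_left_eq)
      finally show ?thesis by (simp add: algebra_simps)
    qed
    ultimately have "sh (a (b x)) = sh (b (a x))" by simp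
    then have "enc (sh (a (b x))) (th (a (b x))) = enc (sh (b (a x))) (th (b (a x)))"
      using tab(1) tba(1) by simp
    then show ?thesis by simp
  qed
qed

lemma comm_Q2: assumes a: "a \<in> Q2" and b: "b \<in> Q2"
  shows "a \<otimes>\<^bsub>IET\<^esub> b \<otimes>\<^bsub>IET\<^esub> inv\<^bsub>IET\<^esub> a \<otimes>\<^bsub>IET\<^esub> inv\<^bsub>IET\<^esub> b = \<one>\<^bsub>IET\<^esub>"
proof -
  interpret G: group IET by (rule group_IET)
  have c: "a \<in> carrier IET" "b \<in> carrier IET" using a b unfolding Q2_def by auto
  have "a \<otimes>\<^bsub>IET\<^esub> b = b \<otimes>\<^bsub>IET\<^esub> a" using Q2_commute[OF a b] by simp
  then have "a \<otimes>\<^bsub>IET\<^esub> b \<otimes>\<^bsub>IET\<^esub> inv\<^bsub>IET\<^esub> a \<otimes>\<^bsub>IET\<^esub> inv\<^bsub>IET\<^esub> b =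
       b \<otimes>\<^bsub>IET\<^esub> (a \<otimes>\<^bsub>IET\<^esub> inv\<^bsub>IET\<^esub> a) \<otimes>\<^bsub>IET\<^esub> inv\<^bsub>IET\<^esub> b"
    using c G.m_assoc G.inv_closed G.m_closed by metis
  also have "\<dots> = \<one>\<^bsub>IET\<^esub>" using c G.r_inv G.r_one G.inv_closed by metis
  finally show ?thesis .
qed

lemma derived_sub:
  assumes "subgroup K IET" "\<And>a b. a \<in> J \<Longrightarrow> b \<in> J \<Longrightarrow> a \<otimes>\<^bsub>IET\<^esub> b \<otimes>\<^bsub>IET\<^esub> inv\<^bsub>IET\<^esub> a \<otimes>\<^bsub>IET\<^esub> inv\<^bsub>IET\<^esub> b \<in> K"
  shows "derived IET J \<subseteq> K"
  unfolding derived_def by (rule group.generate_subgroup_incl[OF group_IET]) (use assms in auto)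

lemma derived3_trivial:
  assumes "J \<subseteq> Q0" and "subgroup J IET"
  shows "(derived IET ^^ 3) J = {\<one>\<^bsub>IET\<^esub>}"
proof -
  have 1: "derived IET J \<subseteq> Q1"
    by (rule derived_sub[OF subgroup_Q1]) (use comm_Q0 assms(1) in blast)
  have 2: "derived IET (derived IET J) \<subseteq> Q2"
    by (rule derived_sub[OF subgroup_Q2]) (use comm_Q1 1 in blast)
  have 3: "derived IET (derived IET (derived IET J)) \<subseteq> {\<one>\<^bsub>IET\<^esub>}"
    by (rule derived_sub[OF group.triv_subgroup[OF group_IET]]) (use comm_Q2 2 in blast)
  have "\<one>\<^bsub>IET\<^esub> \<in> derived IET (derived IET (derived IET J))"
    unfolding derived_def by (rule generate.one)
  then show ?thesis using 3 by (auto simp: numeral_3_eq_3)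
qed



(* The concrete generators *)

definition alpha :: real where "alpha = (SOME a. a \<in> {1/2<..<5/8} \<and> a \<notin> \<rat>)"

lemma alpha_props: "1/2 < alpha" "alpha < 5/8" "alpha \<notin> \<rat>"
proof -
  have "\<exists>a. a \<in> {1/2<..<5/8::real} \<and> a \<notin> \<rat>"
  proof (rule ccontr)
    assume "\<not> ?thesis"
    then have "{1/2<..<5/8::real} \<subseteq> \<rat>" by blast
    then have "countable {1/2<..<5/8::real}" using countable_rat countable_subset by blast
    then show False using uncountable_open_interval[of "1/2::real" "5/8"] by simp
  qed
  then have "alpha \<in> {1/2<..<5/8} \<and> alpha \<notin> \<rat>" unfolding alpha_def by (rule someI_ex)
  then show "1/2 < alpha" "alpha < 5/8" "alpha \<notin> \<rat>" by auto
qed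

definition eA :: "real \<Rightarrow> int" where "eA u = (if u < 1/4 then -1 else 1)"
definition eB :: "real \<Rightarrow> real \<Rightarrow> int" where "eB b u = (if b \<le> u \<and> u < b + 1/4 then -1 else 1)"
definition cB :: "real \<Rightarrow> real \<Rightarrow> int" where "cB b u = (if b \<le> u \<and> u < b + 1/4 then 1 else 0)"

definition fA :: "real \<Rightarrow> real" where "fA = lam eA (\<lambda>u. 0)"
definition gB :: "real \<Rightarrow> real \<Rightarrow> real" where "gB b = lam (eB b) (cB b)"
definition rotA :: "real \<Rightarrow> real" where "rotA = rot alpha"

lemma eA_pm: "eA u = 1 \<or> eA u = -1" unfolding eA_def by auto
lemma eB_pm: "eB b u = 1 \<or> eB b u = -1" unfolding eB_def by auto

lemma fA_iet: "is_iet fA"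
  unfolding fA_def
proof (rule lam_iet[where D = "{1/4}"])
  show "pw_const eA {1/4}" unfolding pw_const_def eA_def by auto
  show "pw_const (\<lambda>u. 0) {1/4}" unfolding pw_const_def by auto
qed (auto simp: eA_pm)

lemma pw_ind: "pw_const (\<lambda>u. if b \<le> u \<and> u < b + 1/4 then (X::int) else Y) {b, b + 1/4}"
  unfolding pw_const_def
proof (intro allI impI)
  fix t1 t2 :: real
  assume h: "0 \<le> t1" "t1 \<le> t2" "t2 < 1" "\<forall>d\<in>{b, b + 1/4}. \<not> (t1 < d \<and> d \<le> t2)"
  then have h1: "\<not> (t1 < b \<and> b \<le> t2)" "\<not> (t1 < b + 1/4 \<and> b + 1/4 \<le> t2)" by auto
  have "(b \<le> t1 \<and> t1 < b + 1/4) \<longleftrightarrow> (b \<le> t2 \<and> t2 < b + 1/4)"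
    using h1 h(2) by (smt (verit))
  then show "(if b \<le> t1 \<and> t1 < b + 1/4 then X else Y) = (if b \<le> t2 \<and> t2 < b + 1/4 then X else Y)"
    by simp
qed

lemma gB_iet: "is_iet (gB b)"
  unfolding gB_def
proof (rule lam_iet[where D = "{b, b + 1/4}"])
  show "pw_const (eB b) {b, b + 1/4}" unfolding eB_def by (rule pw_ind)
  show "pw_const (cB b) {b, b + 1/4}" unfolding cB_def by (rule pw_ind)
qed (auto simp: eB_pm)

lemma rotA_iet: "is_iet rotA" unfolding rotA_def by (rule rot_iet)

lemma isq_rot: "isq (rot s) s (\<lambda>u. 1) (\<lambda>u. 0)"
  unfolding isq_def
proof (intro conjI ballI)
  fix x :: real assume x: "x \<in> {0..<1}"
  have "0 \<le> sh x" "sh x \<le> 2" using sh_range x by auto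
  moreover have "0 \<le> frac (th x + s)" "frac (th x + s) < 1" using frac_lt_1 by auto
  ultimately show "th (rot s x) = frac (th x + s)" "sh (rot s x) = (1 * sh x + 0) mod 3"
    using x sh_mod by (simp_all add: rot_def)
qed auto

lemma isq_lam: assumes "\<And>u. e u = 1 \<or> e u = -1" shows "isq (lam e c) 0 e c"
  unfolding isq_def
proof (intro conjI ballI)
  fix x :: real assume x: "x \<in> {0..<1}"
  have "0 \<le> th x" "th x < 1" using th_range by auto
  then show "th (lam e c x) = frac (th x + 0)" "sh (lam e c x) = (e (th x) * sh x + c (th x)) mod 3"
    using x by (simp_all add: lam_def)
qed (use assms in auto)

definition Hgrp :: "real \<Rightarrow> (real \<Rightarrow> real) set" where
  "Hgrp b = generate IET {rotA, fA, gB b}"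

lemma gens_carrier: "{rotA, fA, gB b} \<subseteq> carrier IET"
  using rotA_iet fA_iet gB_iet carrier_IET by auto

lemma gens_Q0: "{rotA, fA, gB b} \<subseteq> Q0"
  unfolding Q0_def using gens_carrier isq_rot isq_lam eA_pm eB_pm
  unfolding rotA_def fA_def gB_def by blast

lemma Hgrp_subgroup: "subgroup (Hgrp b) IET"
  unfolding Hgrp_def by (rule group.generate_is_subgroup[OF group_IET gens_carrier])

lemma Hgrp_Q0: "Hgrp b \<subseteq> Q0"
  unfolding Hgrp_def by (rule group.generate_subgroup_incl[OF group_IET gens_Q0 subgroup_Q0])

lemma Hgrp_gens: "rotA \<in> Hgrp b" "fA \<in> Hgrp b" "gB b \<in> Hgrp b"
  unfolding Hgrp_def by (auto intro: generate.incl)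

lemma Hgrp_derived3: "(derived IET ^^ 3) (Hgrp b) = {\<one>\<^bsub>IET\<^esub>}"
  using derived3_trivial Hgrp_Q0 Hgrp_subgroup by blast

lemma fA_enc: "0 \<le> j \<Longrightarrow> j \<le> 2 \<Longrightarrow> 0 \<le> t \<Longrightarrow> t < 1 \<Longrightarrow>
   fA (enc j t) = enc (if t < 1/4 then (- j) mod 3 else j) t"
  unfolding fA_def eA_def by simp

lemma gB_enc: "0 \<le> j \<Longrightarrow> j \<le> 2 \<Longrightarrow> 0 \<le> t \<Longrightarrow> t < 1 \<Longrightarrow>
   gB b (enc j t) = enc (if b \<le> t \<and> t < b + 1/4 then (1 - j) mod 3 else j) t"
  unfolding gB_def eB_def cB_def by simp

lemma inv_self: assumes "is_iet h" "\<And>x. h (h x) = x" shows "inv\<^bsub>IET\<^esub> h = h"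
proof -
  have "h \<circ> h = id" using assms(2) by auto
  then show ?thesis using group.inv_equality[OF group_IET] assms(1) carrier_IET by auto
qed

lemma lam_invol:
  assumes "\<And>u. e u = 1 \<or> e u = -1" "\<And>u. (e u * c u + c u) mod 3 = 0"
  shows "lam e c (lam e c x) = x"
proof -
  have "lam e c (lam e c x) = lam (\<lambda>t. e t * e t) (\<lambda>t. e t * c t + c t) x" by (simp add: lam_lam)
  also have "\<dots> = lam (\<lambda>t. 1) (\<lambda>t. 0) x"
  proof (rule lam_cong)
    fix t
    show "e t * e t = 1" using assms(1)[of t] by auto
    show "(e t * c t + c t) mod 3 = 0 mod 3" using assms(2)[of t] by simp
  qed
  finally show ?thesis by (simp add: lam_id)
qed

lemma inv_fA: "inv\<^bsub>IET\<^esub> fA = fA"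
  by (rule inv_self[OF fA_iet]) (unfold fA_def, rule lam_invol, auto simp: eA_pm)

lemma inv_gB: "inv\<^bsub>IET\<^esub> (gB b) = gB b"
  by (rule inv_self[OF gB_iet]) (unfold gB_def, rule lam_invol, auto simp: eB_pm eB_def cB_def)

lemma inv_rot: "inv\<^bsub>IET\<^esub> (rot t) = rot (- t)"
proof -
  have "rot (- t) \<circ> rot t = id" by (simp add: rot_comp rot_zero_id)
  then show ?thesis using group.inv_equality[OF group_IET] rot_iet carrier_IET by auto
qed

lemma rotA_pow: "rotA [^]\<^bsub>IET\<^esub> (n::nat) = rot (real n * alpha)"
proof (induction n)
  case 0 then show ?case by (simp add: rot_zero_id)
next
  case (Suc n) then show ?case by (simp add: rotA_def rot_comp algebra_simps)
qed

(* Non-triviality of the second derived subgroup *)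

lemma frac_phi: assumes "0 \<le> b" "b \<le> 1/8" shows "frac (b - alpha) = b - alpha + 1"
  using assms alpha_props by (simp add: frac_unique_iff)

lemma frac_back: assumes "0 \<le> b" "b \<le> 1/8" shows "frac (b - alpha + 1 + alpha) = b"
  using assms by (simp add: frac_unique_iff)

lemma evals:
  assumes b: "0 \<le> b" "b \<le> 1/8" and j: "0 \<le> j" "j \<le> 2"
  shows "rot (- alpha) (enc j b) = enc j (b - alpha + 1)"
    "rot alpha (enc j (b - alpha + 1)) = enc j b"
    "fA (enc j (b - alpha + 1)) = enc j (b - alpha + 1)"
    "gB b (enc j (b - alpha + 1)) = enc j (b - alpha + 1)"
    "fA (enc j b) = enc ((- j) mod 3) b"
    "gB b (enc j b) = enc ((1 - j) mod 3) b"
proof -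
  have p: "0 \<le> b - alpha + 1" "b - alpha + 1 < 1" using b alpha_props by auto
  show "rot (- alpha) (enc j b) = enc j (b - alpha + 1)"
    using j b frac_phi[OF b] by simp
  show "rot alpha (enc j (b - alpha + 1)) = enc j b"
    using j p frac_back[OF b] by simp
  show "fA (enc j (b - alpha + 1)) = enc j (b - alpha + 1)"
    using j p alpha_props b by (simp add: fA_enc)
  show "gB b (enc j (b - alpha + 1)) = enc j (b - alpha + 1)"
    using j p alpha_props b by (simp add: gB_enc)
  show "fA (enc j b) = enc ((- j) mod 3) b"
    using j b by (simp add: fA_enc)
  show "gB b (enc j b) = enc ((1 - j) mod 3) b"
    using j b by (simp add: gB_enc)
qed

lemma inv_comm_gen:
  assumes "group G" "a \<in> carrier G" "b \<in> carrier G"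
  shows "inv\<^bsub>G\<^esub> (a \<otimes>\<^bsub>G\<^esub> b \<otimes>\<^bsub>G\<^esub> inv\<^bsub>G\<^esub> a \<otimes>\<^bsub>G\<^esub> inv\<^bsub>G\<^esub> b) =
    b \<otimes>\<^bsub>G\<^esub> a \<otimes>\<^bsub>G\<^esub> inv\<^bsub>G\<^esub> b \<otimes>\<^bsub>G\<^esub> inv\<^bsub>G\<^esub> a"
proof -
  interpret G: group G by fact
  show ?thesis using assms(2,3) by (simp add: G.inv_mult_group G.m_assoc)
qed

lemma derived2_nontrivial:
  assumes b: "0 \<le> b" "b \<le> 1/8"
  shows "\<exists>d \<in> (derived IET ^^ 2) (Hgrp b). d \<noteq> id"
proof -
  interpret G: group IET by (rule group_IET)
  define c1 where "c1 = rotA \<otimes>\<^bsub>IET\<^esub> fA \<otimes>\<^bsub>IET\<^esub> inv\<^bsub>IET\<^esub> rotA \<otimes>\<^bsub>IET\<^esub> inv\<^bsub>IET\<^esub> fA"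
  define c2 where "c2 = rotA \<otimes>\<^bsub>IET\<^esub> gB b \<otimes>\<^bsub>IET\<^esub> inv\<^bsub>IET\<^esub> rotA \<otimes>\<^bsub>IET\<^esub> inv\<^bsub>IET\<^esub> (gB b)"
  define d where "d = c1 \<otimes>\<^bsub>IET\<^esub> c2 \<otimes>\<^bsub>IET\<^esub> inv\<^bsub>IET\<^esub> c1 \<otimes>\<^bsub>IET\<^esub> inv\<^bsub>IET\<^esub> c2"
  have gc: "rotA \<in> carrier IET" "fA \<in> carrier IET" "gB b \<in> carrier IET" using gens_carrier by auto
  have c1d: "c1 \<in> derived IET (Hgrp b)"
    unfolding c1_def derived_def using Hgrp_gens by (blast intro: generate.incl)
  have c2d: "c2 \<in> derived IET (Hgrp b)"
    unfolding c2_def derived_def using Hgrp_gens by (blast intro: generate.incl)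
  have dd: "d \<in> (derived IET ^^ 2) (Hgrp b)"
    unfolding d_def numeral_2_eq_2 using c1d c2d by (simp add: derived_def) (blast intro: generate.incl)
  have c1f: "c1 = ((rot alpha \<circ> fA) \<circ> rot (- alpha)) \<circ> fA"
    unfolding c1_def by (simp only: inv_fA inv_rot rotA_def mult_IET)
  have c2f: "c2 = ((rot alpha \<circ> gB b) \<circ> rot (- alpha)) \<circ> gB b"
    unfolding c2_def by (simp only: inv_gB inv_rot rotA_def mult_IET)
  have c1i: "inv\<^bsub>IET\<^esub> c1 = ((fA \<circ> rot alpha) \<circ> fA) \<circ> rot (- alpha)"
  proof -
    have "inv\<^bsub>IET\<^esub> c1 = fA \<otimes>\<^bsub>IET\<^esub> rotA \<otimes>\<^bsub>IET\<^esub> inv\<^bsub>IET\<^esub> fA \<otimes>\<^bsub>IET\<^esub> inv\<^bsub>IET\<^esub> rotA"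
      unfolding c1_def by (rule inv_comm_gen[OF group_IET gc(1,2)])
    then show ?thesis by (simp only: inv_fA inv_rot rotA_def mult_IET)
  qed
  have c2i: "inv\<^bsub>IET\<^esub> c2 = ((gB b \<circ> rot alpha) \<circ> gB b) \<circ> rot (- alpha)"
  proof -
    have "inv\<^bsub>IET\<^esub> c2 = gB b \<otimes>\<^bsub>IET\<^esub> rotA \<otimes>\<^bsub>IET\<^esub> inv\<^bsub>IET\<^esub> (gB b) \<otimes>\<^bsub>IET\<^esub> inv\<^bsub>IET\<^esub> rotA"
      unfolding c2_def by (rule inv_comm_gen[OF group_IET gc(1,3)])
    then show ?thesis by (simp only: inv_gB inv_rot rotA_def mult_IET)
  qed
  note c1i' = c1i[unfolded c1f]
  note c2i' = c2i[unfolded c2f]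
  define p where "p = b - alpha + 1"
  have E: "rot (- alpha) (enc j b) = enc j p" "rot alpha (enc j p) = enc j b"
    "fA (enc j p) = enc j p" "gB b (enc j p) = enc j p" if "0 \<le> j" "j \<le> 2" for j
    using evals[OF b that] unfolding p_def by auto
  have E0: "rot (- alpha) (enc 0 b) = enc 0 p" "rot alpha (enc 0 p) = enc 0 b"
    "fA (enc 0 p) = enc 0 p" "gB b (enc 0 p) = enc 0 p" using E[of 0] by auto
  have E1: "rot (- alpha) (enc 1 b) = enc 1 p" "rot alpha (enc 1 p) = enc 1 b"
    "fA (enc 1 p) = enc 1 p" "gB b (enc 1 p) = enc 1 p" using E[of 1] by auto
  have E2: "rot (- alpha) (enc 2 b) = enc 2 p" "rot alpha (enc 2 p) = enc 2 b"
    "fA (enc 2 p) = enc 2 p" "gB b (enc 2 p) = enc 2 p" using E[of 2] by auto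
  have F: "fA (enc 0 b) = enc 0 b" "fA (enc 1 b) = enc 2 b" "fA (enc 2 b) = enc 1 b"
    "gB b (enc 0 b) = enc 1 b" "gB b (enc 1 b) = enc 0 b" "gB b (enc 2 b) = enc 2 b"
    using evals(5,6)[OF b, of 0] evals(5,6)[OF b, of 1] evals(5,6)[OF b, of 2] by auto
  have "d (enc 0 b) = enc 1 b"
    unfolding d_def mult_IET c1i c2i unfolding c1f c2f by (simp only: o_apply E0 E1 E2 F)
  moreover have "enc 1 b \<noteq> enc 0 b" using b by (simp add: enc_eq_iff)
  ultimately have "d \<noteq> id" by (metis id_apply)
  then show ?thesis using dd by blast
qed

lemma derived_length_Hgrp:
  assumes b: "0 \<le> b" "b \<le> 1/8"
  shows "derived_length_eq (Hgrp b) 3"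
proof -
  interpret G: group IET by (rule group_IET)
  obtain d where d: "d \<in> (derived IET ^^ 2) (Hgrp b)" "d \<noteq> id" using derived2_nontrivial[OF b] by blast
  have s0: "subgroup (Hgrp b) IET" by (rule Hgrp_subgroup)
  have s1: "subgroup (derived IET (Hgrp b)) IET" using G.derived_is_subgroup s0 subgroup.subset by blast
  have i1: "derived IET (Hgrp b) \<subseteq> Hgrp b" using G.derived_incl[OF subset_refl s0] .
  have i2: "derived IET (derived IET (Hgrp b)) \<subseteq> derived IET (Hgrp b)" using G.derived_incl[OF subset_refl s1] .
  have d2: "d \<in> derived IET (derived IET (Hgrp b))" using d(1) by (simp add: numeral_2_eq_2)
  have "\<forall>j<3. (derived IET ^^ j) (Hgrp b) \<noteq> {\<one>\<^bsub>IET\<^esub>}"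
  proof (intro allI impI)
    fix j :: nat assume "j < 3"
    then have "j = 0 \<or> j = 1 \<or> j = 2" by auto
    moreover have "d \<in> (derived IET ^^ 0) (Hgrp b)" using d2 i1 i2 by auto
    moreover have "d \<in> (derived IET ^^ 1) (Hgrp b)" using d2 i2 by auto
    moreover have "d \<in> (derived IET ^^ 2) (Hgrp b)" using d(1) .
    ultimately have "d \<in> (derived IET ^^ j) (Hgrp b)" by auto
    then show "(derived IET ^^ j) (Hgrp b) \<noteq> {\<one>\<^bsub>IET\<^esub>}" using d(2) by auto
  qed
  then show ?thesis unfolding derived_length_eq_def using Hgrp_derived3 by blast
qed



(* The commutation invariant *)

definition Bad :: "real \<Rightarrow> real \<Rightarrow> bool" where
  "Bad t b \<longleftrightarrow> (\<exists>u. 0 \<le> u \<and> u < 1/4 \<and> b \<le> frac (u - t) \<and> frac (u - t) < b + 1/4)"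

definition wn :: "real \<Rightarrow> real \<Rightarrow> real \<Rightarrow> real" where
  "wn t b = (rot t \<circ> gB b) \<circ> rot (- t)"

lemma wn_enc:
  assumes j: "0 \<le> j" "j \<le> 2" and u: "0 \<le> u" "u < 1"
  shows "wn t b (enc j u) = enc (if b \<le> frac (u - t) \<and> frac (u - t) < b + 1/4 then (1 - j) mod 3 else j) u"
proof -
  define p where "p = frac (u - t)"
  define j' where "j' = (if b \<le> p \<and> p < b + 1/4 then (1 - j) mod 3 else j)"
  have p: "0 \<le> p" "p < 1" unfolding p_def using frac_lt_1 by auto
  have j': "0 \<le> j'" "j' \<le> 2" unfolding j'_def using j by auto
  have 1: "rot (- t) (enc j u) = enc j p" using j u unfolding p_def by simp
  have 2: "gB b (enc j p) = enc j' p" using gB_enc[OF j p] unfolding j'_def by simp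
  have "frac (p + t) = frac (u - t + t)" unfolding p_def by (rule frac_frac_add)
  also have "\<dots> = u" using u by simp
  finally have 3: "rot t (enc j' p) = enc j' u" using j' p by simp
  show ?thesis unfolding wn_def using 1 2 3 unfolding j'_def p_def by simp
qed

lemma wn_out: "x \<notin> {0..<1} \<Longrightarrow> wn t b x = x"
  unfolding wn_def gB_def by auto

lemma fA_out: "x \<notin> {0..<1} \<Longrightarrow> fA x = x"
  unfolding fA_def by simp

lemma comm_iff: "(fA \<circ> wn t b = wn t b \<circ> fA) \<longleftrightarrow> \<not> Bad t b"
proof
  assume eq: "fA \<circ> wn t b = wn t b \<circ> fA"
  show "\<not> Bad t b"
  proof
    assume "Bad t b"
    then obtain u where u: "0 \<le> u" "u < 1/4" "b \<le> frac (u - t)" "frac (u - t) < b + 1/4"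
      unfolding Bad_def by blast
    have u1: "u < 1" using u by simp
    have "fA (wn t b (enc 0 u)) = fA (enc 1 u)" using wn_enc[of 0 u t b] u u1 by simp
    also have "\<dots> = enc 2 u" using fA_enc[of 1 u] u u1 by simp
    finally have l: "(fA \<circ> wn t b) (enc 0 u) = enc 2 u" by simp
    have "wn t b (fA (enc 0 u)) = wn t b (enc 0 u)" using fA_enc[of 0 u] u u1 by simp
    also have "\<dots> = enc 1 u" using wn_enc[of 0 u t b] u u1 by simp
    finally have r: "(wn t b \<circ> fA) (enc 0 u) = enc 1 u" by simp
    have "enc 2 u = enc 1 u" using l r eq by metis
    then show False using u u1 by (simp add: enc_eq_iff)
  qed
next
  assume nb: "\<not> Bad t b"
  show "fA \<circ> wn t b = wn t b \<circ> fA"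
  proof
    fix x
    show "(fA \<circ> wn t b) x = (wn t b \<circ> fA) x"
    proof (cases "x \<in> {0..<1}")
      case False then show ?thesis by (simp add: wn_out fA_out)
    next
      case True
      then obtain j u where x: "x = enc j u" "0 \<le> j" "j \<le> 2" "0 \<le> u" "u < 1" using in_enc by blast
      show ?thesis
      proof (cases "u < 1/4")
        case True
        then have nc: "\<not> (b \<le> frac (u - t) \<and> frac (u - t) < b + 1/4)" using nb x unfolding Bad_def by blast
        have m: "0 \<le> (- j) mod 3" "(- j) mod 3 \<le> 2" by auto
        have w: "wn t b x = enc j u" using wn_enc[OF x(2,3,4,5), of t b] x(1) unfolding if_not_P[OF nc] by simp
        have f: "fA x = enc ((- j) mod 3) u" using fA_enc[OF x(2,3,4,5)] True x(1) by simp
        have "fA (wn t b x) = enc ((- j) mod 3) u" using w f x(1) by simp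
        moreover have "wn t b (fA x) = enc ((- j) mod 3) u" using f wn_enc[OF m x(4,5), of t b] unfolding if_not_P[OF nc] by simp
        ultimately show ?thesis by simp
      next
        case False
        define j' where "j' = (if b \<le> frac (u - t) \<and> frac (u - t) < b + 1/4 then (1 - j) mod 3 else j)"
        have j': "0 \<le> j'" "j' \<le> 2" unfolding j'_def using x by auto
        have w: "wn t b x = enc j' u" using x wn_enc unfolding j'_def by simp
        have "fA (wn t b x) = enc j' u" using w j' x False by (simp add: fA_enc)
        moreover have "wn t b (fA x) = enc j' u" using w x False by (simp add: fA_enc)
        ultimately show ?thesis by simp
      qed
    qed
  qed
qed

definition Tinv :: "('a, 'b) monoid_scheme \<Rightarrow> 'a \<Rightarrow> 'a \<Rightarrow> 'a \<Rightarrow> nat set" where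
  "Tinv G x y z = {n. y \<otimes>\<^bsub>G\<^esub> (x [^]\<^bsub>G\<^esub> n \<otimes>\<^bsub>G\<^esub> z \<otimes>\<^bsub>G\<^esub> inv\<^bsub>G\<^esub> (x [^]\<^bsub>G\<^esub> n)) =
      (x [^]\<^bsub>G\<^esub> n \<otimes>\<^bsub>G\<^esub> z \<otimes>\<^bsub>G\<^esub> inv\<^bsub>G\<^esub> (x [^]\<^bsub>G\<^esub> n)) \<otimes>\<^bsub>G\<^esub> y}"

lemma T_concrete: "Tinv IET rotA fA (gB b) = {n. \<not> Bad (real n * alpha) b}"
proof -
  have "rotA [^]\<^bsub>IET\<^esub> n \<otimes>\<^bsub>IET\<^esub> gB b \<otimes>\<^bsub>IET\<^esub> inv\<^bsub>IET\<^esub> (rotA [^]\<^bsub>IET\<^esub> n) = wn (real n * alpha) b" for n :: nat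
    unfolding rotA_pow wn_def by (simp add: inv_rot)
  then show ?thesis unfolding Tinv_def using comm_iff by simp
qed

lemma T_separates:
  assumes b: "0 \<le> b" "b < b'" "b' \<le> 1/8"
  shows "\<exists>n. \<not> Bad (real n * alpha) b \<and> Bad (real n * alpha) b'"
proof -
  have irr: "- alpha \<notin> \<rat>" using alpha_props(3) by (metis minus_minus Rats_minus_iff)
  define a where "a = (b + b') / 2 + 1/4"
  define eps where "eps = (b' - b) / 2"
  have a: "0 \<le> a" "a \<le> 1" unfolding a_def using b by (auto simp: field_simps)
  have eps: "eps > 0" unfolding eps_def using b by auto
  obtain k :: nat where k: "k > 0" "\<bar>frac (real k * - alpha) - a\<bar> < eps"
    using Kronecker_approx_1_explicit[OF irr a eps] by blast
  define d where "d = frac (real k * - alpha)"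
  have "\<bar>d - a\<bar> < eps" using k unfolding d_def by simp
  then have da: "a - eps < d" "d < a + eps" by auto
  have "a - eps = b + 1/4" "a + eps = b' + 1/4" unfolding a_def eps_def by (simp_all add: field_simps)
  then have d: "b + 1/4 < d" "d < b' + 1/4" using da by auto
  have fr: "frac (u - real k * alpha) = u + d" if "0 \<le> u" "u < 1/4" for u
  proof -
    have "frac (u - real k * alpha) = frac (frac (real k * - alpha) + u)"
      using frac_frac_add[of "real k * - alpha" u] by (simp add: algebra_simps)
    also have "\<dots> = u + d" unfolding d_def[symmetric] using that d b by (simp add: frac_eq)
    finally show ?thesis .
  qed
  have "\<not> Bad (real k * alpha) b"
    unfolding Bad_def using fr d by auto
  moreover have "Bad (real k * alpha) b'"
    unfolding Bad_def using fr[of 0] d b by (intro exI[of _ 0]) auto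
  ultimately show ?thesis by blast
qed

lemma T_inj: "inj_on (\<lambda>b. Tinv IET rotA fA (gB b)) {0..1/8}"
proof (rule inj_onI)
  fix b b' :: real
  assume bb: "b \<in> {0..1/8}" "b' \<in> {0..1/8}" and eq: "Tinv IET rotA fA (gB b) = Tinv IET rotA fA (gB b')"
  show "b = b'"
  proof (rule ccontr)
    assume "b \<noteq> b'"
    then have "b < b' \<or> b' < b" by auto
    then show False
    proof
      assume "b < b'"
      then obtain n where "\<not> Bad (real n * alpha) b" "Bad (real n * alpha) b'" using T_separates bb by auto
      then show False using eq unfolding T_concrete by blast
    next
      assume "b' < b"
      then obtain n where "\<not> Bad (real n * alpha) b'" "Bad (real n * alpha) b" using T_separates bb by auto
      then show False using eq unfolding T_concrete by blast
    qed
  qed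
qed



(* Isomorphism invariance and counting *)

lemma Tinv_iso:
  assumes G: "group G" and K: "group K" and ph: "\<phi> \<in> iso G K"
    and x: "x \<in> carrier G" and y: "y \<in> carrier G" and z: "z \<in> carrier G"
  shows "Tinv K (\<phi> x) (\<phi> y) (\<phi> z) = Tinv G x y z"
  unfolding Tinv_def
proof (rule Collect_cong)
  fix n :: nat
  have hom: "\<phi> \<in> hom G K" and bij: "bij_betw \<phi> (carrier G) (carrier K)" using ph unfolding iso_def by auto
  interpret hh: group_hom G K \<phi> using G K hom unfolding group_hom_def group_hom_axioms_def by simp
  have inj: "inj_on \<phi> (carrier G)" using bij bij_betw_def by blast
  define w where "w = x [^]\<^bsub>G\<^esub> n \<otimes>\<^bsub>G\<^esub> z \<otimes>\<^bsub>G\<^esub> inv\<^bsub>G\<^esub> (x [^]\<^bsub>G\<^esub> n)"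
  have wc: "w \<in> carrier G" unfolding w_def using x z by simp
  have pw: "\<phi> w = \<phi> x [^]\<^bsub>K\<^esub> n \<otimes>\<^bsub>K\<^esub> \<phi> z \<otimes>\<^bsub>K\<^esub> inv\<^bsub>K\<^esub> (\<phi> x [^]\<^bsub>K\<^esub> n)"
    unfolding w_def using x z by (simp add: hh.hom_nat_pow)
  have m: "y \<otimes>\<^bsub>G\<^esub> w \<in> carrier G" "w \<otimes>\<^bsub>G\<^esub> y \<in> carrier G"
    using wc y monoid.m_closed[OF group.is_monoid[OF G]] by auto
  have key: "(\<phi> y \<otimes>\<^bsub>K\<^esub> \<phi> w = \<phi> w \<otimes>\<^bsub>K\<^esub> \<phi> y) \<longleftrightarrow> (y \<otimes>\<^bsub>G\<^esub> w = w \<otimes>\<^bsub>G\<^esub> y)"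
    using inj_on_eq_iff[OF inj m] hh.hom_mult[OF y wc] hh.hom_mult[OF wc y] by simp
  show "(\<phi> y \<otimes>\<^bsub>K\<^esub> (\<phi> x [^]\<^bsub>K\<^esub> n \<otimes>\<^bsub>K\<^esub> \<phi> z \<otimes>\<^bsub>K\<^esub> inv\<^bsub>K\<^esub> (\<phi> x [^]\<^bsub>K\<^esub> n)) =
      (\<phi> x [^]\<^bsub>K\<^esub> n \<otimes>\<^bsub>K\<^esub> \<phi> z \<otimes>\<^bsub>K\<^esub> inv\<^bsub>K\<^esub> (\<phi> x [^]\<^bsub>K\<^esub> n)) \<otimes>\<^bsub>K\<^esub> \<phi> y) =
    (y \<otimes>\<^bsub>G\<^esub> (x [^]\<^bsub>G\<^esub> n \<otimes>\<^bsub>G\<^esub> z \<otimes>\<^bsub>G\<^esub> inv\<^bsub>G\<^esub> (x [^]\<^bsub>G\<^esub> n)) =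
      (x [^]\<^bsub>G\<^esub> n \<otimes>\<^bsub>G\<^esub> z \<otimes>\<^bsub>G\<^esub> inv\<^bsub>G\<^esub> (x [^]\<^bsub>G\<^esub> n)) \<otimes>\<^bsub>G\<^esub> y)"
    using key[unfolded pw] unfolding w_def .
qed

definition Invs :: "('a, 'b) monoid_scheme \<Rightarrow> nat set set" where
  "Invs G = (\<lambda>(x, y, z). Tinv G x y z) ` (carrier G \<times> carrier G \<times> carrier G)"

lemma Invs_iso:
  assumes G: "group G" and K: "group K" and iso: "G \<cong> K"
  shows "Invs G \<subseteq> Invs K"
proof
  fix T assume "T \<in> Invs G"
  then obtain x y z where xyz: "x \<in> carrier G" "y \<in> carrier G" "z \<in> carrier G" and T: "T = Tinv G x y z"
    unfolding Invs_def by auto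
  obtain \<phi> where ph: "\<phi> \<in> iso G K" using iso unfolding is_iso_def by auto
  have "\<phi> \<in> carrier G \<rightarrow> carrier K" using ph unfolding iso_def hom_def by auto
  then have "\<phi> x \<in> carrier K" "\<phi> y \<in> carrier K" "\<phi> z \<in> carrier K" using xyz by auto
  moreover have "T = Tinv K (\<phi> x) (\<phi> y) (\<phi> z)" using Tinv_iso[OF G K ph xyz] T by simp
  ultimately show "T \<in> Invs K" unfolding Invs_def by force
qed

lemma Invs_countable: "countable (carrier G) \<Longrightarrow> countable (Invs G)"
  unfolding Invs_def by simp

lemma foldr_comp: "foldr (\<circ>) l g = foldr (\<circ>) l id \<circ> (g :: 'a \<Rightarrow> 'a)"
  by (induction l) (auto simp: o_assoc)

lemma gen_countable:
  assumes "finite S" shows "countable (generate IET S)"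
proof -
  define A where "A = S \<union> (\<lambda>s. inv\<^bsub>IET\<^esub> s) ` S"
  define W where "W = (\<lambda>l. foldr (\<circ>) l id) ` lists A"
  have "countable A" unfolding A_def using assms by (simp add: countable_finite)
  then have cW: "countable W" unfolding W_def by simp
  have "generate IET S \<subseteq> W"
  proof
    fix h assume "h \<in> generate IET S"
    then show "h \<in> W"
    proof (induction rule: generate.induct)
      case one
      have "foldr (\<circ>) [] id \<in> W" unfolding W_def by blast
      then show ?case by (simp add: id_def)
    next
      case (incl h)
      then have "[h] \<in> lists A" unfolding A_def by auto
      then have "foldr (\<circ>) [h] id \<in> W" unfolding W_def by blast
      then show ?case by simp
    next
      case (inv h)
      then have "[inv\<^bsub>IET\<^esub> h] \<in> lists A" unfolding A_def by auto
      then have "foldr (\<circ>) [inv\<^bsub>IET\<^esub> h] id \<in> W" unfolding W_def by blast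
      then show ?case by simp
    next
      case (eng h1 h2)
      then obtain l1 l2 where l: "l1 \<in> lists A" "l2 \<in> lists A" "h1 = foldr (\<circ>) l1 id" "h2 = foldr (\<circ>) l2 id"
        unfolding W_def by auto
      have "foldr (\<circ>) (l1 @ l2) id = h1 \<circ> h2" using l foldr_comp[of l1 "foldr (\<circ>) l2 id"] by simp
      moreover have "l1 @ l2 \<in> lists A" using l by simp
      ultimately show ?case unfolding W_def mult_IET by (metis image_eqI)
    qed
  qed
  then show ?thesis using cW countable_subset by blast
qed

lemma Tinv_sub:
  assumes H: "subgroup H IET" and x: "x \<in> H"
  shows "Tinv (IET\<lparr>carrier := H\<rparr>) x y z = Tinv IET x y z"
proof -
  interpret G: group IET by (rule group_IET)
  have gH: "group (IET\<lparr>carrier := H\<rparr>)" using G.subgroup_imp_group[OF H] .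
  have pw: "x [^]\<^bsub>IET\<lparr>carrier := H\<rparr>\<^esub> n = x [^]\<^bsub>IET\<^esub> n" for n :: nat
    using G.nat_pow_consistent by simp
  have "x [^]\<^bsub>IET\<lparr>carrier := H\<rparr>\<^esub> n \<in> carrier (IET\<lparr>carrier := H\<rparr>)" for n :: nat
    using monoid.nat_pow_closed[OF group.is_monoid[OF gH]] x by simp
  then have pin: "x [^]\<^bsub>IET\<^esub> n \<in> H" for n :: nat using pw by simp
  have iv: "inv\<^bsub>IET\<lparr>carrier := H\<rparr>\<^esub> (x [^]\<^bsub>IET\<^esub> n) = inv\<^bsub>IET\<^esub> (x [^]\<^bsub>IET\<^esub> n)" for n :: nat
    using G.m_inv_consistent[OF H pin] .
  show ?thesis unfolding Tinv_def pw iv by simp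
qed

definition Hs :: "real \<Rightarrow> (real \<Rightarrow> real) monoid" where
  "Hs b = IET\<lparr>carrier := Hgrp b\<rparr>"

lemma Hs_group: "group (Hs b)"
  unfolding Hs_def using group.subgroup_imp_group[OF group_IET Hgrp_subgroup] .

lemma Hs_countable: "countable (carrier (Hs b))"
  unfolding Hs_def Hgrp_def using gen_countable[of "{rotA, fA, gB b}"] by simp

lemma T_in_Invs: "Tinv IET rotA fA (gB b) \<in> Invs (Hs b)"
proof -
  have "Tinv (Hs b) rotA fA (gB b) = Tinv IET rotA fA (gB b)"
    unfolding Hs_def using Tinv_sub[OF Hgrp_subgroup Hgrp_gens(1)] .
  moreover have "(rotA, fA, gB b) \<in> carrier (Hs b) \<times> carrier (Hs b) \<times> carrier (Hs b)"
    unfolding Hs_def using Hgrp_gens by simp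
  ultimately show ?thesis unfolding Invs_def by (metis (no_types, lifting) case_prod_conv image_eqI)
qed

definition cls :: "real \<Rightarrow> real set" where
  "cls b = {b'. b' \<in> {0..1/8} \<and> Hs b' \<cong> Hs b}"

lemma cls_countable: "countable (cls b)"
proof -
  have sub: "(\<lambda>b. Tinv IET rotA fA (gB b)) ` cls b \<subseteq> Invs (Hs b)"
  proof
    fix T assume "T \<in> (\<lambda>b. Tinv IET rotA fA (gB b)) ` cls b"
    then obtain b' where b': "b' \<in> cls b" "T = Tinv IET rotA fA (gB b')" by auto
    have "T \<in> Invs (Hs b')" using T_in_Invs b' by simp
    moreover have "Invs (Hs b') \<subseteq> Invs (Hs b)" using Invs_iso[OF Hs_group Hs_group] b' unfolding cls_def by auto
    ultimately show "T \<in> Invs (Hs b)" by auto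
  qed
  have "countable (Invs (Hs b))" using Invs_countable Hs_countable by blast
  then have "countable ((\<lambda>b. Tinv IET rotA fA (gB b)) ` cls b)" using sub countable_subset by blast
  moreover have "inj_on (\<lambda>b. Tinv IET rotA fA (gB b)) (cls b)"
    using T_inj unfolding cls_def by (rule inj_on_subset) auto
  ultimately show ?thesis using countable_image_inj_on by blast
qed

lemma cls_eq: assumes "Hs b1 \<cong> Hs b2" shows "cls b1 = cls b2"
proof -
  have s: "Hs b2 \<cong> Hs b1" using group.iso_sym[OF Hs_group assms] .
  show ?thesis unfolding cls_def using iso_trans assms s by blast
qed

lemma cls_self: "b \<in> {0..1/8} \<Longrightarrow> b \<in> cls b" unfolding cls_def by simp

theorem main_construction:
  "\<exists>S :: (real \<Rightarrow> real) set set.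
           uncountable S \<and>
           (\<forall>H\<in>S. subgroup H IET \<and>
                   (\<exists>a b c. {a, b, c} \<subseteq> carrier IET \<and> H = generate IET {a, b, c}) \<and>
                   derived_length_eq H 3) \<and>
           (\<forall>H1\<in>S. \<forall>H2\<in>S. H1 \<noteq> H2 \<longrightarrow>
                   \<not> (IET\<lparr>carrier := H1\<rparr> \<cong> IET\<lparr>carrier := H2\<rparr>))"
proof -
  define U where "U = {0..1/8::real}"
  define C where "C = cls ` U"
  define rep where "rep c = (SOME b. b \<in> c)" for c :: "real set"
  have repC: "rep c \<in> U \<and> cls (rep c) = c" if "c \<in> C" for c
  proof -
    have "c \<in> cls ` U" using that unfolding C_def .
    then obtain b where b': "c = cls b" "b \<in> U" by (rule imageE)
    then have b: "b \<in> U" "c = cls b" by auto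
    have "b \<in> c" using b cls_self unfolding U_def by simp
    then have r: "rep c \<in> c" unfolding rep_def by (rule someI)
    then have "rep c \<in> U" "Hs (rep c) \<cong> Hs b" using b unfolding cls_def U_def by auto
    then show ?thesis using cls_eq b by simp
  qed
  have uC: "uncountable C"
  proof
    assume cC: "countable C"
    have "\<Union> C = U"
    proof
      show "\<Union> C \<subseteq> U" unfolding C_def cls_def U_def by auto
      show "U \<subseteq> \<Union> C" unfolding C_def using cls_self U_def by auto
    qed
    moreover have "countable (\<Union> C)"
    proof -
      have "countable (\<Union>c\<in>C. c)"
      proof (rule countable_UN[OF cC])
        fix c assume "c \<in> C"
        then show "countable c" using cls_countable unfolding C_def by auto
      qed
      then show ?thesis by simp
    qed
    ultimately show False using uncountable_closed_interval[of "0::real" "1/8"] unfolding U_def by simp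
  qed
  define S where "S = (\<lambda>c. Hgrp (rep c)) ` C"
  have inj: "inj_on (\<lambda>c. Hgrp (rep c)) C"
  proof (rule inj_onI)
    fix c1 c2 assume c: "c1 \<in> C" "c2 \<in> C" "Hgrp (rep c1) = Hgrp (rep c2)"
    then have "Hs (rep c1) = Hs (rep c2)" unfolding Hs_def by simp
    then have "Hs (rep c1) \<cong> Hs (rep c2)" by simp
    then have "cls (rep c1) = cls (rep c2)" by (rule cls_eq)
    then show "c1 = c2" using repC c by metis
  qed
  have "uncountable S" unfolding S_def using uC inj countable_image_inj_on by blast
  moreover have "\<forall>H\<in>S. subgroup H IET \<and>
                   (\<exists>a b c. {a, b, c} \<subseteq> carrier IET \<and> H = generate IET {a, b, c}) \<and>
                   derived_length_eq H 3"
  proof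
    fix H assume "H \<in> S"
    then obtain c where c: "c \<in> C" "H = Hgrp (rep c)" unfolding S_def by auto
    have r: "0 \<le> rep c" "rep c \<le> 1/8" using repC[OF c(1)] unfolding U_def by auto
    show "subgroup H IET \<and> (\<exists>a b c. {a, b, c} \<subseteq> carrier IET \<and> H = generate IET {a, b, c}) \<and>
                   derived_length_eq H 3"
      using Hgrp_subgroup gens_carrier derived_length_Hgrp[OF r] c(2) unfolding Hgrp_def by blast
  qed
  moreover have "\<forall>H1\<in>S. \<forall>H2\<in>S. H1 \<noteq> H2 \<longrightarrow> \<not> (IET\<lparr>carrier := H1\<rparr> \<cong> IET\<lparr>carrier := H2\<rparr>)"
  proof (intro ballI impI notI)
    fix H1 H2 assume h: "H1 \<in> S" "H2 \<in> S" "H1 \<noteq> H2" "IET\<lparr>carrier := H1\<rparr> \<cong> IET\<lparr>carrier := H2\<rparr>"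
    obtain c1 where c1: "c1 \<in> C" "H1 = Hgrp (rep c1)" using h(1) unfolding S_def by auto
    obtain c2 where c2: "c2 \<in> C" "H2 = Hgrp (rep c2)" using h(2) unfolding S_def by auto
    have "Hs (rep c1) \<cong> Hs (rep c2)" using h(4) c1 c2 unfolding Hs_def by simp
    then have "cls (rep c1) = cls (rep c2)" by (rule cls_eq)
    then have "c1 = c2" using repC c1 c2 by metis
    then show False using h(3) c1 c2 by simp
  qed
  ultimately show ?thesis by blast
qed


theorem mainTheorem4:
  shows "\<exists>S :: (real \<Rightarrow> real) set set.
           uncountable S \<and>
           (\<forall>H\<in>S. subgroup H IET \<and>
                   (\<exists>a b c. {a, b, c} \<subseteq> carrier IET \<and> H = generate IET {a, b, c}) \<and>
                   derived_length_eq H 3) \<and>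
           (\<forall>H1\<in>S. \<forall>H2\<in>S. H1 \<noteq> H2 \<longrightarrow>
                   \<not> (IET\<lparr>carrier := H1\<rparr> \<cong> IET\<lparr>carrier := H2\<rparr>))"
  by (rule main_construction)

end
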